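(* Let $A$ be a Hopf algebra over a field $k$ admitting a Haar measure, and let $Z$ be an $A$-Galois extension. Then there exists a unique Haar measure on $Z$.
   Context: An $A$-Galois extension is a nonzero left $A$-comodule algebra $Z$ (coaction $\alpha_Z:Z\to A\otimes Z$ an algebra morphism) such that $(1_A\otimes m_Z)\circ(\alpha_Z\otimes 1_Z):Z\otimes Z\to A\otimes Z$ is bijective. A Haar measure on $Z$ is a linear map $\mu:Z\to k$ with $(1_A\otimes\mu)\circ\alpha_Z=u_A\circ\mu$ (where $u_A:k\to A$ is the unit) and $\mu(1_Z)=1$. A Haar measure on $A$ is a Haar measure on $A$ viewed as an $A$-Galois extension via $\Delta$, i.e. a linear $J:A\to k$ with $(1_A\otimes J)\Delta=u_A\circ J$ and $J(1)=1$. *)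

theory Defs
  imports Main "HOL.Vector_Spaces"
begin

text \<open>
A k-vector space
is a type 'v of class ab_group_add together with a scalar multiplication
s :: 'k => 'v => 'v satisfying the library locale vector_space s.  A (unital,
associative) k-algebra is a type of class ring_1 (so in particular 1 \<noteq> 0,
i.e. the algebra is nonzero) whose scalar multiplication is compatible with
the ring multiplication.

Tensor products are realised concretely: the free k-vector space on a set X
consists of the finitely supported functions X => k; the tensor product
V (x) W is the quotient of the free vector space on V x W by the k-span of the
bilinearity relations, and V (x) W (x) U is the quotient of the free vector
space on V x W x U by the span of the trilinearity relations.  Elements of
tensor products are handled through representatives, equality in the tensor
product being the equivalence teq2 / teq3 below.
\<close>

definition supp :: "('x \<Rightarrow> 'k::zero) \<Rightarrow> 'x set" where
  "supp f = {x. f x \<noteq> 0}"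

definition fsupp :: "('x \<Rightarrow> 'k::zero) \<Rightarrow> bool" where
  "fsupp f \<longleftrightarrow> finite (supp f)"

definition delta :: "'x \<Rightarrow> 'x \<Rightarrow> 'k::{zero,one}" where
  "delta x = (\<lambda>y. if y = x then 1 else 0)"

definition fext :: "('x \<Rightarrow> 'y \<Rightarrow> 'k::comm_semiring_1) \<Rightarrow> ('x \<Rightarrow> 'k) \<Rightarrow> 'y \<Rightarrow> 'k" where
  "fext h f = (\<lambda>y. \<Sum>x\<in>supp f. f x * h x y)"

definition fsumv :: "('k::zero \<Rightarrow> 'v \<Rightarrow> 'v) \<Rightarrow> ('x \<Rightarrow> 'v::comm_monoid_add) \<Rightarrow> ('x \<Rightarrow> 'k) \<Rightarrow> 'v" where
  "fsumv s g f = (\<Sum>x\<in>supp f. s (f x) (g x))"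

inductive_set fspan :: "('x \<Rightarrow> 'k::field) set \<Rightarrow> ('x \<Rightarrow> 'k) set" for G where
  zero: "(\<lambda>_. 0) \<in> fspan G"
| step: "g \<in> G \<Longrightarrow> f \<in> fspan G \<Longrightarrow> (\<lambda>x. c * g x + f x) \<in> fspan G"

definition rel2 :: "('k::field \<Rightarrow> 'v::ab_group_add \<Rightarrow> 'v) \<Rightarrow> ('k \<Rightarrow> 'w::ab_group_add \<Rightarrow> 'w)
    \<Rightarrow> ('v \<times> 'w \<Rightarrow> 'k) set" where
  "rel2 sV sW =
     {(\<lambda>p. delta (v + v', w) p - delta (v, w) p - delta (v', w) p) | v v' w. True}
   \<union> {(\<lambda>p. delta (v, w + w') p - delta (v, w) p - delta (v, w') p) | v w w'. True}
   \<union> {(\<lambda>p. delta (sV c v, w) p - c * delta (v, w) p) | c v w. True}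
   \<union> {(\<lambda>p. delta (v, sW c w) p - c * delta (v, w) p) | c v w. True}"

definition teq2 :: "('k::field \<Rightarrow> 'v::ab_group_add \<Rightarrow> 'v) \<Rightarrow> ('k \<Rightarrow> 'w::ab_group_add \<Rightarrow> 'w)
    \<Rightarrow> ('v \<times> 'w \<Rightarrow> 'k) \<Rightarrow> ('v \<times> 'w \<Rightarrow> 'k) \<Rightarrow> bool" where
  "teq2 sV sW f g \<longleftrightarrow> (\<lambda>p. f p - g p) \<in> fspan (rel2 sV sW)"

definition rel3 :: "('k::field \<Rightarrow> 'u::ab_group_add \<Rightarrow> 'u) \<Rightarrow> ('k \<Rightarrow> 'v::ab_group_add \<Rightarrow> 'v)
    \<Rightarrow> ('k \<Rightarrow> 'w::ab_group_add \<Rightarrow> 'w) \<Rightarrow> ('u \<times> 'v \<times> 'w \<Rightarrow> 'k) set" where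
  "rel3 sU sV sW =
     {(\<lambda>p. delta (u + u', v, w) p - delta (u, v, w) p - delta (u', v, w) p) | u u' v w. True}
   \<union> {(\<lambda>p. delta (u, v + v', w) p - delta (u, v, w) p - delta (u, v', w) p) | u v v' w. True}
   \<union> {(\<lambda>p. delta (u, v, w + w') p - delta (u, v, w) p - delta (u, v, w') p) | u v w w'. True}
   \<union> {(\<lambda>p. delta (sU c u, v, w) p - c * delta (u, v, w) p) | c u v w. True}
   \<union> {(\<lambda>p. delta (u, sV c v, w) p - c * delta (u, v, w) p) | c u v w. True}
   \<union> {(\<lambda>p. delta (u, v, sW c w) p - c * delta (u, v, w) p) | c u v w. True}"

definition teq3 :: "('k::field \<Rightarrow> 'u::ab_group_add \<Rightarrow> 'u) \<Rightarrow> ('k \<Rightarrow> 'v::ab_group_add \<Rightarrow> 'v)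
    \<Rightarrow> ('k \<Rightarrow> 'w::ab_group_add \<Rightarrow> 'w) \<Rightarrow> ('u \<times> 'v \<times> 'w \<Rightarrow> 'k) \<Rightarrow> ('u \<times> 'v \<times> 'w \<Rightarrow> 'k) \<Rightarrow> bool" where
  "teq3 sU sV sW f g \<longleftrightarrow> (\<lambda>p. f p - g p) \<in> fspan (rel3 sU sV sW)"

definition tmul :: "('a::times \<times> 'b::times \<Rightarrow> 'k::comm_semiring_1) \<Rightarrow> ('a \<times> 'b \<Rightarrow> 'k) \<Rightarrow> ('a \<times> 'b \<Rightarrow> 'k)" where
  "tmul f g = fext (\<lambda>p. fext (\<lambda>q. delta (fst p * fst q, snd p * snd q)) g) f"

text \<open>(h (x) id) : A (x) Z -> A (x) A (x) Z  and  (id (x) h) : A (x) Z -> A (x) B (x) W\<close>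
definition map_left :: "('a \<Rightarrow> ('b \<times> 'c \<Rightarrow> 'k::comm_semiring_1)) \<Rightarrow> ('a \<times> 'z \<Rightarrow> 'k) \<Rightarrow> ('b \<times> 'c \<times> 'z \<Rightarrow> 'k)" where
  "map_left h f = fext (\<lambda>(a, z). fext (\<lambda>(x, y). delta (x, y, z)) (h a)) f"

definition map_right :: "('z \<Rightarrow> ('b \<times> 'w \<Rightarrow> 'k::comm_semiring_1)) \<Rightarrow> ('a \<times> 'z \<Rightarrow> 'k) \<Rightarrow> ('a \<times> 'b \<times> 'w \<Rightarrow> 'k)" where
  "map_right h f = fext (\<lambda>(a, z). fext (\<lambda>(b, w). delta (a, b, w)) (h z)) f"

definition k_algebra :: "('k::field \<Rightarrow> 'a::ring_1 \<Rightarrow> 'a) \<Rightarrow> bool" where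
  "k_algebra s \<longleftrightarrow> vector_space s \<and>
     (\<forall>c x y. s c (x * y) = s c x * y \<and> s c (x * y) = x * s c y)"

definition tlinear :: "('k::field \<Rightarrow> 'x::ab_group_add \<Rightarrow> 'x) \<Rightarrow> ('k \<Rightarrow> 'v::ab_group_add \<Rightarrow> 'v)
    \<Rightarrow> ('k \<Rightarrow> 'w::ab_group_add \<Rightarrow> 'w) \<Rightarrow> ('x \<Rightarrow> ('v \<times> 'w \<Rightarrow> 'k)) \<Rightarrow> bool" where
  "tlinear sX sV sW h \<longleftrightarrow> (\<forall>x. fsupp (h x)) \<and>
     (\<forall>x y. teq2 sV sW (h (x + y)) (\<lambda>p. h x p + h y p)) \<and>
     (\<forall>c x. teq2 sV sW (h (sX c x)) (\<lambda>p. c * h x p))"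

definition hopf_algebra :: "('k::field \<Rightarrow> 'a::ring_1 \<Rightarrow> 'a) \<Rightarrow> ('a \<Rightarrow> ('a \<times> 'a \<Rightarrow> 'k))
    \<Rightarrow> ('a \<Rightarrow> 'k) \<Rightarrow> bool" where
  "hopf_algebra sA Delta eps \<longleftrightarrow>
     k_algebra sA \<and>
     \<comment> \<open>comultiplication: linear, coassociative\<close>
     tlinear sA sA sA Delta \<and>
     (\<forall>a. teq3 sA sA sA (map_left Delta (Delta a)) (map_right Delta (Delta a))) \<and>
     \<comment> \<open>counit: linear, counital\<close>
     Vector_Spaces.linear sA (*) eps \<and>
     (\<forall>a. fsumv sA (\<lambda>(x, y). sA (eps x) y) (Delta a) = a) \<and>
     (\<forall>a. fsumv sA (\<lambda>(x, y). sA (eps y) x) (Delta a) = a) \<and>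
     \<comment> \<open>bialgebra: Delta and eps are algebra morphisms\<close>
     (\<forall>x y. teq2 sA sA (Delta (x * y)) (tmul (Delta x) (Delta y))) \<and>
     teq2 sA sA (Delta 1) (delta (1, 1)) \<and>
     (\<forall>x y. eps (x * y) = eps x * eps y) \<and> eps 1 = 1 \<and>
     \<comment> \<open>antipode: m (S (x) id) Delta = u eps = m (id (x) S) Delta\<close>
     (\<exists>S. Vector_Spaces.linear sA sA S \<and>
        (\<forall>a. fsumv sA (\<lambda>(x, y). S x * y) (Delta a) = sA (eps a) 1) \<and>
        (\<forall>a. fsumv sA (\<lambda>(x, y). x * S y) (Delta a) = sA (eps a) 1))"

definition comodule_algebra :: "('k::field \<Rightarrow> 'a::ring_1 \<Rightarrow> 'a) \<Rightarrow> ('a \<Rightarrow> ('a \<times> 'a \<Rightarrow> 'k))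
    \<Rightarrow> ('a \<Rightarrow> 'k) \<Rightarrow> ('k \<Rightarrow> 'z::ring_1 \<Rightarrow> 'z) \<Rightarrow> ('z \<Rightarrow> ('a \<times> 'z \<Rightarrow> 'k)) \<Rightarrow> bool" where
  "comodule_algebra sA Delta eps sZ alpha \<longleftrightarrow>
     k_algebra sZ \<and>
     tlinear sZ sA sZ alpha \<and>
     \<comment> \<open>(Delta (x) id) alpha = (id (x) alpha) alpha\<close>
     (\<forall>z. teq3 sA sA sZ (map_left Delta (alpha z)) (map_right alpha (alpha z))) \<and>
     \<comment> \<open>(eps (x) id) alpha = id\<close>
     (\<forall>z. fsumv sZ (\<lambda>(a, w). sZ (eps a) w) (alpha z) = z) \<and>
     \<comment> \<open>alpha is an algebra morphism\<close>
     (\<forall>z w. teq2 sA sZ (alpha (z * w)) (tmul (alpha z) (alpha w))) \<and>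
     teq2 sA sZ (alpha 1) (delta (1, 1))"

text \<open>the map (id (x) m_Z)(alpha (x) id) : Z (x) Z -> A (x) Z on representatives\<close>
definition galois_map :: "('z::times \<Rightarrow> ('a::ring_1 \<times> 'z \<Rightarrow> 'k::field)) \<Rightarrow> ('z \<times> 'z \<Rightarrow> 'k) \<Rightarrow> ('a \<times> 'z \<Rightarrow> 'k)" where
  "galois_map alpha F = fext (\<lambda>(z, w). tmul (alpha z) (delta (1, w))) F"

text \<open>Z is a nonzero comodule algebra (nonzero is automatic: 'z is of class ring_1)
  whose Galois map is a (well-defined) bijection Z (x) Z -> A (x) Z.\<close>
definition galois_extension :: "('k::field \<Rightarrow> 'a::ring_1 \<Rightarrow> 'a) \<Rightarrow> ('a \<Rightarrow> ('a \<times> 'a \<Rightarrow> 'k))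
    \<Rightarrow> ('a \<Rightarrow> 'k) \<Rightarrow> ('k \<Rightarrow> 'z::ring_1 \<Rightarrow> 'z) \<Rightarrow> ('z \<Rightarrow> ('a \<times> 'z \<Rightarrow> 'k)) \<Rightarrow> bool" where
  "galois_extension sA Delta eps sZ alpha \<longleftrightarrow>
     comodule_algebra sA Delta eps sZ alpha \<and>
     (\<forall>F G. fsupp F \<longrightarrow> fsupp G \<longrightarrow>
        (teq2 sZ sZ F G \<longleftrightarrow> teq2 sA sZ (galois_map alpha F) (galois_map alpha G))) \<and>
     (\<forall>H. fsupp H \<longrightarrow> (\<exists>F. fsupp F \<and> teq2 sA sZ (galois_map alpha F) H))"

definition haar_measure :: "('k::field \<Rightarrow> 'a::ring_1 \<Rightarrow> 'a) \<Rightarrow> ('k \<Rightarrow> 'z::ring_1 \<Rightarrow> 'z)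
    \<Rightarrow> ('z \<Rightarrow> ('a \<times> 'z \<Rightarrow> 'k)) \<Rightarrow> ('z \<Rightarrow> 'k) \<Rightarrow> bool" where
  "haar_measure sA sZ alpha mu \<longleftrightarrow>
     Vector_Spaces.linear sZ (*) mu \<and>
     (\<forall>z. fsumv sA (\<lambda>(a, w). sA (mu w) a) (alpha z) = sA (mu z) 1) \<and>
     mu 1 = 1"

end

theory Submission
  imports Defs
begin

definition lin :: "('k::field \<Rightarrow> 'v::ab_group_add \<Rightarrow> 'v) \<Rightarrow> ('k \<Rightarrow> 'w::ab_group_add \<Rightarrow> 'w) \<Rightarrow> ('v \<Rightarrow> 'w) \<Rightarrow> bool" where
  "lin s1 s2 f \<longleftrightarrow> (\<forall>x y. f (x + y) = f x + f y) \<and> (\<forall>c x. f (s1 c x) = s2 c (f x))"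

definition bil :: "('k::field \<Rightarrow> 'u::ab_group_add \<Rightarrow> 'u) \<Rightarrow> ('k \<Rightarrow> 'v::ab_group_add \<Rightarrow> 'v) \<Rightarrow> ('k \<Rightarrow> 'w::ab_group_add \<Rightarrow> 'w) \<Rightarrow> ('u \<Rightarrow> 'v \<Rightarrow> 'w) \<Rightarrow> bool" where
  "bil s1 s2 s3 g \<longleftrightarrow> (\<forall>y. lin s1 s3 (\<lambda>x. g x y)) \<and> (\<forall>x. lin s2 s3 (g x))"

definition tri :: "('k::field \<Rightarrow> 'u::ab_group_add \<Rightarrow> 'u) \<Rightarrow> ('k \<Rightarrow> 'v::ab_group_add \<Rightarrow> 'v) \<Rightarrow> ('k \<Rightarrow> 'w::ab_group_add \<Rightarrow> 'w) \<Rightarrow> ('k \<Rightarrow> 'x::ab_group_add \<Rightarrow> 'x) \<Rightarrow> ('u \<Rightarrow> 'v \<Rightarrow> 'w \<Rightarrow> 'x) \<Rightarrow> bool" where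
  "tri s1 s2 s3 s4 g \<longleftrightarrow> (\<forall>y z. lin s1 s4 (\<lambda>x. g x y z)) \<and> (\<forall>x z. lin s2 s4 (\<lambda>y. g x y z)) \<and> (\<forall>x y. lin s3 s4 (g x y))"

lemma vs_field: "vector_space ((*) :: 'k::field \<Rightarrow> 'k \<Rightarrow> 'k)"
  by unfold_locales (auto simp: algebra_simps)

lemma lin_zero: "lin s1 s2 f \<Longrightarrow> f 0 = 0"
proof -
  assume "lin s1 s2 f"
  then have "f (0 + 0) = f 0 + f 0" unfolding lin_def by blast
  then show ?thesis by simp
qed

lemma lin_sum: assumes "lin s1 s2 f" shows "f (sum g A) = (\<Sum>x\<in>A. f (g x))"
proof (induct A rule: infinite_finite_induct)
  case (insert x F)
  have "f (g x + sum g F) = f (g x) + f (sum g F)" using assms unfolding lin_def by blast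
  then show ?case using insert by simp
qed (auto simp: lin_zero[OF assms])

lemma lin_neg: "lin s1 s2 f \<Longrightarrow> f (- x) = - f x"
proof -
  assume l: "lin s1 s2 f"
  have "f (- x) + f x = 0" using l lin_zero[OF l] unfolding lin_def by (metis add.left_inverse)
  then show ?thesis by (simp add: eq_neg_iff_add_eq_0)
qed

lemma lin_add: "lin s1 s2 f \<Longrightarrow> f (x + y) = f x + f y"
  unfolding lin_def by blast

lemma lin_scale: "lin s1 s2 f \<Longrightarrow> f (s1 c x) = s2 c (f x)"
  unfolding lin_def by blast

lemma lin_diff: "lin s1 s2 f \<Longrightarrow> f (x - y) = f x - f y"
proof -
  assume l: "lin s1 s2 f"
  have "f (x - y) = f (x + - y)" by (simp only: diff_conv_add_uminus)
  also have "\<dots> = f x + f (- y)" by (rule lin_add[OF l])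
  also have "\<dots> = f x - f y" by (simp add: lin_neg[OF l])
  finally show ?thesis .
qed

lemma linear_lin: assumes "Vector_Spaces.linear s1 s2 f" shows "lin s1 s2 f"
proof -
  have m: "module_hom s1 s2 f" using assms by (simp add: module_hom_iff_linear)
  show ?thesis unfolding lin_def using module_hom.add[OF m] module_hom.scale[OF m] by blast
qed

lemma supp_delta: "supp (delta p :: 'x \<Rightarrow> 'k::{zero_neq_one}) = {p}"
  by (auto simp: supp_def delta_def)

lemma fsupp_delta[simp]: "fsupp (delta p :: 'x \<Rightarrow> 'k::{zero_neq_one})"
  by (simp add: fsupp_def supp_delta)

lemma fsupp_add: "fsupp f \<Longrightarrow> fsupp g \<Longrightarrow> fsupp (\<lambda>x. f x + g x :: 'k::comm_monoid_add)"
  unfolding fsupp_def supp_def by (rule finite_subset[of _ "{x. f x \<noteq> 0} \<union> {x. g x \<noteq> 0}"]) auto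

lemma fsupp_diff: "fsupp f \<Longrightarrow> fsupp g \<Longrightarrow> fsupp (\<lambda>x. f x - g x :: 'k::ab_group_add)"
  unfolding fsupp_def supp_def by (rule finite_subset[of _ "{x. f x \<noteq> 0} \<union> {x. g x \<noteq> 0}"]) auto

lemma fsupp_scale: "fsupp f \<Longrightarrow> fsupp (\<lambda>x. c * f x :: 'k::field)"
  unfolding fsupp_def supp_def by (rule finite_subset[of _ "{x. f x \<noteq> 0}"]) auto

lemma fsupp_zero[simp]: "fsupp (\<lambda>x. 0)"
  unfolding fsupp_def supp_def by simp

lemma fsumv_superset:
  assumes "vector_space s" "finite T" "supp f \<subseteq> T"
  shows "fsumv s g f = (\<Sum>x\<in>T. s (f x) (g x))"
proof -
  interpret V: vector_space s by fact
  show ?thesis unfolding fsumv_def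
    by (rule sum.mono_neutral_left) (use assms in \<open>auto simp: supp_def\<close>)
qed

lemma fsumv_add:
  assumes "vector_space s" "fsupp f" "fsupp f'"
  shows "fsumv s g (\<lambda>x. f x + f' x) = fsumv s g f + fsumv s g f'"
proof -
  interpret V: vector_space s by fact
  let ?T = "supp f \<union> supp f'"
  have T: "finite ?T" using assms by (simp add: fsupp_def)
  have "fsumv s g (\<lambda>x. f x + f' x) = (\<Sum>x\<in>?T. s (f x + f' x) (g x))"
    by (rule fsumv_superset[OF assms(1) T]) (auto simp: supp_def)
  also have "\<dots> = (\<Sum>x\<in>?T. s (f x) (g x)) + (\<Sum>x\<in>?T. s (f' x) (g x))"
    by (simp add: V.scale_left_distrib sum.distrib)
  also have "\<dots> = fsumv s g f + fsumv s g f'"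
    using fsumv_superset[OF assms(1) T, of f g] fsumv_superset[OF assms(1) T, of f' g] by auto
  finally show ?thesis .
qed

lemma fsumv_diff:
  assumes "vector_space s" "fsupp f" "fsupp f'"
  shows "fsumv s g (\<lambda>x. f x - f' x) = fsumv s g f - fsumv s g f'"
proof -
  interpret V: vector_space s by fact
  let ?T = "supp f \<union> supp f'"
  have T: "finite ?T" using assms by (simp add: fsupp_def)
  have "fsumv s g (\<lambda>x. f x - f' x) = (\<Sum>x\<in>?T. s (f x - f' x) (g x))"
    by (rule fsumv_superset[OF assms(1) T]) (auto simp: supp_def)
  also have "\<dots> = (\<Sum>x\<in>?T. s (f x) (g x)) - (\<Sum>x\<in>?T. s (f' x) (g x))"
    by (simp add: V.scale_left_diff_distrib sum_subtractf)
  also have "\<dots> = fsumv s g f - fsumv s g f'"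
    using fsumv_superset[OF assms(1) T, of f g] fsumv_superset[OF assms(1) T, of f' g] by auto
  finally show ?thesis .
qed

lemma fsumv_scale:
  assumes "vector_space s" "fsupp f"
  shows "fsumv s g (\<lambda>x. c * f x) = s c (fsumv s g f)"
proof -
  interpret V: vector_space s by fact
  have T: "finite (supp f)" using assms by (simp add: fsupp_def)
  have "fsumv s g (\<lambda>x. c * f x) = (\<Sum>x\<in>supp f. s (c * f x) (g x))"
    by (rule fsumv_superset[OF assms(1) T]) (auto simp: supp_def)
  also have "\<dots> = s c (fsumv s g f)"
    by (simp add: fsumv_def V.scale_sum_right)
  finally show ?thesis .
qed

lemma fsumv_zero: "vector_space s \<Longrightarrow> fsumv s g (\<lambda>x. 0) = 0"
  by (simp add: fsumv_def supp_def)

lemma fsumv_delta: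
  assumes "vector_space s" shows "fsumv s g (delta p) = g p"
proof -
  interpret V: vector_space s by fact
  show ?thesis unfolding fsumv_def supp_delta by (simp add: delta_def)
qed

lemma fsumv_gadd:
  assumes "vector_space s" shows "fsumv s (\<lambda>x. g x + g' x) f = fsumv s g f + fsumv s g' f"
proof -
  interpret V: vector_space s by fact
  show ?thesis by (simp add: fsumv_def V.scale_right_distrib sum.distrib)
qed

lemma fsumv_gdiff:
  assumes "vector_space s" shows "fsumv s (\<lambda>x. g x - g' x) f = fsumv s g f - fsumv s g' f"
proof -
  interpret V: vector_space s by fact
  show ?thesis by (simp add: fsumv_def V.scale_right_diff_distrib sum_subtractf)
qed

lemma fsumv_gscale:
  assumes "vector_space s" shows "fsumv s (\<lambda>x. s c (g x)) f = s c (fsumv s g f)"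
proof -
  interpret V: vector_space s by fact
  show ?thesis by (simp add: fsumv_def V.scale_sum_right mult.commute)
qed

lemma fsumv_gzero:
  assumes "vector_space s" shows "fsumv s (\<lambda>x. 0) f = 0"
proof -
  interpret V: vector_space s by fact
  show ?thesis by (simp add: fsumv_def)
qed

lemma fsumv_cong: "(\<And>x. x \<in> supp f \<Longrightarrow> g x = g' x) \<Longrightarrow> fsumv s g f = fsumv s g' f"
  unfolding fsumv_def by (rule sum.cong) auto

lemma fsumv_lin:
  assumes "lin s1 s2 L"
  shows "L (fsumv s1 g f) = fsumv s2 (\<lambda>x. L (g x)) f"
  unfolding fsumv_def lin_sum[OF assms] by (simp add: lin_scale[OF assms])

lemma fsumv_swap:
  assumes "vector_space s"
  shows "fsumv s (\<lambda>x. fsumv s (\<lambda>y. G x y) f2) f1 = fsumv s (\<lambda>y. fsumv s (\<lambda>x. G x y) f1) f2"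
proof -
  interpret V: vector_space s by fact
  show ?thesis unfolding fsumv_def V.scale_sum_right
    by (subst sum.swap) (simp add: mult.commute)
qed

lemma fsumv_field: "fsumv (*) g f = (\<Sum>x\<in>supp f. f x * g x)"
  by (simp add: fsumv_def)

lemma fspan_add: "f \<in> fspan G \<Longrightarrow> g \<in> fspan G \<Longrightarrow> (\<lambda>x. f x + g x) \<in> fspan G"
proof (induction f rule: fspan.induct)
  case zero then show ?case by simp
next
  case (step g0 f c)
  have "(\<lambda>x. c * g0 x + f x + g x) = (\<lambda>x. c * g0 x + (f x + g x))" by (simp add: add.assoc)
  then show ?case using step by (simp add: fspan.step)
qed

lemma fspan_scale: "f \<in> fspan G \<Longrightarrow> (\<lambda>x. c * f x) \<in> fspan G"
proof (induction f rule: fspan.induct)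
  case zero then show ?case by (simp add: fspan.zero)
next
  case (step g0 f d)
  have "(\<lambda>x. c * (d * g0 x + f x)) = (\<lambda>x. (c*d) * g0 x + c * f x)" by (simp add: algebra_simps)
  then show ?case using step by (simp add: fspan.step)
qed

lemma fspan_gen: "g \<in> G \<Longrightarrow> g \<in> fspan G"
  using fspan.step[of g G "\<lambda>_. 0" 1] by (simp add: fspan.zero)

lemma fspan_diff: "f \<in> fspan G \<Longrightarrow> g \<in> fspan G \<Longrightarrow> (\<lambda>x. f x - g x) \<in> fspan G"
  using fspan_add[of f G "\<lambda>x. (-1) * g x"] fspan_scale[of g G "-1"] by simp

lemma fspan_sum: "finite I \<Longrightarrow> (\<And>i. i \<in> I \<Longrightarrow> f i \<in> fspan G) \<Longrightarrow> (\<lambda>x. \<Sum>i\<in>I. f i x) \<in> fspan G"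
proof (induction I rule: finite_induct)
  case empty then show ?case by (simp add: fspan.zero)
next
  case (insert i I)
  then show ?case using fspan_add[of "f i" G "\<lambda>x. \<Sum>i\<in>I. f i x"] by simp
qed

lemma fspan_fsupp: assumes "\<And>g. g \<in> G \<Longrightarrow> fsupp g" shows "f \<in> fspan G \<Longrightarrow> fsupp f"
proof (induction f rule: fspan.induct)
  case (step g f c) then show ?case using fsupp_add[OF fsupp_scale[OF assms[of g]]] by blast
qed simp

lemma fspan_fsumv:
  assumes "vector_space s" "\<And>g. g \<in> G \<Longrightarrow> fsupp g \<and> fsumv s h g = 0" "f \<in> fspan G"
  shows "fsumv s h f = 0"
proof -
  interpret V: vector_space s by fact
  show ?thesis using assms(3)
  proof (induction f rule: fspan.induct)
    case zero then show ?case by (simp add: fsumv_zero[OF assms(1)])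
  next
    case (step g f c)
    have "fsupp f" using fspan_fsupp[OF _ step(2)] assms(2) by blast
    then show ?case using step assms(2)[of g]
      by (simp add: fsumv_add[OF assms(1)] fsupp_scale fsumv_scale[OF assms(1)])
  qed
qed


lemma bilD:
  assumes "bil s1 s2 s3 B"
  shows "B (x + x') y = B x y + B x' y" "B x (y + y') = B x y + B x y'"
    "B (s1 c x) y = s3 c (B x y)" "B x (s2 c y) = s3 c (B x y)"
  using assms unfolding bil_def lin_def by blast+

lemma triD:
  assumes "tri s1 s2 s3 s4 g"
  shows "g (x + x') y z = g x y z + g x' y z" "g x (y + y') z = g x y z + g x y' z"
    "g x y (z + z') = g x y z + g x y z'"
    "g (s1 c x) y z = s4 c (g x y z)" "g x (s2 c y) z = s4 c (g x y z)" "g x y (s3 c z) = s4 c (g x y z)"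
  using assms unfolding tri_def lin_def by blast+

lemma rel2_fsupp: "g \<in> rel2 sV sW \<Longrightarrow> fsupp g"
  unfolding rel2_def by (auto intro!: fsupp_diff fsupp_scale)

lemma rel3_fsupp: "g \<in> rel3 sU sV sW \<Longrightarrow> fsupp g"
  unfolding rel3_def by (auto intro!: fsupp_diff fsupp_scale)

lemma teq2_fsumv:
  assumes vs: "vector_space s" and B: "bil sV sW s B"
    and F: "fsupp F" and G: "fsupp G" and eq: "teq2 sV sW F G"
  shows "fsumv s (case_prod B) F = fsumv s (case_prod B) G"
proof -
  interpret V: vector_space s by fact
  note bd = bilD[OF B]
  have "fsumv s (case_prod B) (\<lambda>p. F p - G p) = 0"
  proof (rule fspan_fsumv[OF vs _ eq[unfolded teq2_def]])
    fix g assume g: "g \<in> rel2 sV sW"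
    have "fsupp g" using rel2_fsupp[OF g] .
    moreover have "fsumv s (case_prod B) g = 0"
      using g unfolding rel2_def
      by (auto simp: fsumv_diff[OF vs] fsupp_diff fsumv_delta[OF vs] fsumv_scale[OF vs] fsupp_scale bd)
    ultimately show "fsupp g \<and> fsumv s (case_prod B) g = 0" by blast
  qed
  then show ?thesis using fsumv_diff[OF vs F G] by simp
qed

lemma teq3_fsumv:
  assumes vs: "vector_space s" and B: "tri sU sV sW s g"
    and F: "fsupp F" and G: "fsupp G" and eq: "teq3 sU sV sW F G"
  shows "fsumv s (\<lambda>(x, y, z). g x y z) F = fsumv s (\<lambda>(x, y, z). g x y z) G"
proof -
  interpret V: vector_space s by fact
  note bd = triD[OF B]
  have "fsumv s (\<lambda>(x, y, z). g x y z) (\<lambda>p. F p - G p) = 0"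
  proof (rule fspan_fsumv[OF vs _ eq[unfolded teq3_def]])
    fix r assume r: "r \<in> rel3 sU sV sW"
    have "fsupp r" using rel3_fsupp[OF r] .
    moreover have "fsumv s (\<lambda>(x, y, z). g x y z) r = 0"
      using r unfolding rel3_def
      by (elim UnE; clarsimp simp: fsumv_diff[OF vs] fsupp_diff fsumv_delta[OF vs] fsumv_scale[OF vs] fsupp_scale bd)
    ultimately show "fsupp r \<and> fsumv s (\<lambda>(x, y, z). g x y z) r = 0" by blast
  qed
  then show ?thesis using fsumv_diff[OF vs F G] by simp
qed

lemma supp_fext: "supp (fext h f) \<subseteq> (\<Union>x\<in>supp f. supp (h x))"
proof
  fix y assume "y \<in> supp (fext h f)"
  then have "(\<Sum>x\<in>supp f. f x * h x y) \<noteq> 0" by (simp add: supp_def fext_def)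
  then obtain x where "x \<in> supp f" "f x * h x y \<noteq> 0" by (meson sum.neutral)
  then show "y \<in> (\<Union>x\<in>supp f. supp (h x))" by (auto simp: supp_def)
qed

lemma fsupp_fext: "fsupp f \<Longrightarrow> (\<And>x. x \<in> supp f \<Longrightarrow> fsupp (h x)) \<Longrightarrow> fsupp (fext h f)"
  unfolding fsupp_def by (rule finite_subset[OF supp_fext]) (rule finite_UN_I, auto)

lemma fsumv_fext:
  assumes vs: "vector_space s" and f: "fsupp f" and h: "\<And>x. x \<in> supp f \<Longrightarrow> fsupp (h x)"
  shows "fsumv s G (fext h f) = fsumv s (\<lambda>x. fsumv s G (h x)) f"
proof -
  interpret V: vector_space s by fact
  let ?T = "\<Union>x\<in>supp f. supp (h x)"
  have T: "finite ?T" using f h by (auto simp: fsupp_def)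
  have "fsumv s G (fext h f) = (\<Sum>y\<in>?T. s (fext h f y) (G y))"
    by (rule fsumv_superset[OF vs T supp_fext])
  also have "\<dots> = (\<Sum>y\<in>?T. \<Sum>x\<in>supp f. s (f x) (s (h x y) (G y)))"
    by (simp add: fext_def V.scale_sum_left)
  also have "\<dots> = (\<Sum>x\<in>supp f. s (f x) (\<Sum>y\<in>?T. s (h x y) (G y)))"
    by (subst sum.swap) (simp add: V.scale_sum_right)
  also have "\<dots> = (\<Sum>x\<in>supp f. s (f x) (fsumv s G (h x)))"
  proof (rule sum.cong[OF refl])
    fix x assume x: "x \<in> supp f"
    have "fsumv s G (h x) = (\<Sum>y\<in>?T. s (h x y) (G y))"
      by (rule fsumv_superset[OF vs T]) (use x in auto)
    then show "s (f x) (\<Sum>y\<in>?T. s (h x y) (G y)) = s (f x) (fsumv s G (h x))" by simp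
  qed
  also have "\<dots> = fsumv s (\<lambda>x. fsumv s G (h x)) f" by (simp add: fsumv_def)
  finally show ?thesis .
qed

lemma fext_delta: "fext h (delta p :: 'x \<Rightarrow> 'k::field) = h p"
  unfolding fext_def supp_delta by (simp add: delta_def)


lemma rel2_I1: "(\<lambda>p. delta (v + v', w) p - delta (v, w) p - delta (v', w) p) \<in> rel2 sV sW"
  unfolding rel2_def by blast
lemma rel2_I2: "(\<lambda>p. delta (v, w + w') p - delta (v, w) p - delta (v, w') p) \<in> rel2 sV sW"
  unfolding rel2_def by blast
lemma rel2_I3: "(\<lambda>p. delta (sV c v, w) p - c * delta (v, w) p) \<in> rel2 sV sW"
  unfolding rel2_def by blast
lemma rel2_I4: "(\<lambda>p. delta (v, sW c w) p - c * delta (v, w) p) \<in> rel2 sV sW"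
  unfolding rel2_def by blast

lemma delta_zero_left:
  fixes sV :: "'k::field \<Rightarrow> 'v::ab_group_add \<Rightarrow> 'v" and sW :: "'k \<Rightarrow> 'w::ab_group_add \<Rightarrow> 'w"
  shows "delta (0, w) \<in> fspan (rel2 sV sW)"
proof -
  have "(\<lambda>p. (-1) * (delta (0 + 0, w) p - delta (0, w) p - delta (0, w) p)) \<in> fspan (rel2 sV sW)"
    by (rule fspan_scale[OF fspan_gen[OF rel2_I1]])
  moreover have "(\<lambda>p. (-1) * (delta (0 + 0, w) p - delta (0, w) p - delta (0, w) p)) = (delta (0::'v, w) :: _ \<Rightarrow> 'k)"
    by (rule ext) (simp add: algebra_simps)
  ultimately show ?thesis by simp
qed

lemma delta_zero_right:
  fixes sV :: "'k::field \<Rightarrow> 'v::ab_group_add \<Rightarrow> 'v" and sW :: "'k \<Rightarrow> 'w::ab_group_add \<Rightarrow> 'w"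
  shows "delta (v, 0) \<in> fspan (rel2 sV sW)"
proof -
  have "(\<lambda>p. (-1) * (delta (v, 0 + 0) p - delta (v, 0) p - delta (v, 0) p)) \<in> fspan (rel2 sV sW)"
    by (rule fspan_scale[OF fspan_gen[OF rel2_I2]])
  moreover have "(\<lambda>p. (-1) * (delta (v, 0 + 0) p - delta (v, 0) p - delta (v, 0) p)) = (delta (v, 0::'w) :: _ \<Rightarrow> 'k)"
    by (rule ext) (simp add: algebra_simps)
  ultimately show ?thesis by simp
qed

lemma dl:
  fixes sV :: "'k::field \<Rightarrow> 'v::ab_group_add \<Rightarrow> 'v" and sW :: "'k \<Rightarrow> 'w::ab_group_add \<Rightarrow> 'w"
  assumes "finite I"
  shows "(\<lambda>t. delta (\<Sum>i\<in>I. sV (c i) (v i), w) t - (\<Sum>i\<in>I. c i * delta (v i, w) t)) \<in> fspan (rel2 sV sW)"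
  using assms
proof (induction I rule: finite_induct)
  case empty then show ?case using delta_zero_left[of w sV sW] by simp
next
  case (insert j I)
  let ?X = "\<Sum>i\<in>I. sV (c i) (v i)"
  have a: "(\<lambda>p. delta (sV (c j) (v j) + ?X, w) p - delta (sV (c j) (v j), w) p - delta (?X, w) p) \<in> fspan (rel2 sV sW)"
    by (rule fspan_gen[OF rel2_I1])
  have b: "(\<lambda>p. delta (sV (c j) (v j), w) p - c j * delta (v j, w) p) \<in> fspan (rel2 sV sW)"
    by (rule fspan_gen[OF rel2_I3])
  have "(\<lambda>p. (delta (sV (c j) (v j) + ?X, w) p - delta (sV (c j) (v j), w) p - delta (?X, w) p)
      + ((delta (sV (c j) (v j), w) p - c j * delta (v j, w) p)
      + (delta (?X, w) p - (\<Sum>i\<in>I. c i * delta (v i, w) p)))) \<in> fspan (rel2 sV sW)"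
    by (rule fspan_add[OF a fspan_add[OF b insert.IH]])
  then show ?case using insert.hyps by (simp add: algebra_simps)
qed

lemma dr:
  fixes sV :: "'k::field \<Rightarrow> 'v::ab_group_add \<Rightarrow> 'v" and sW :: "'k \<Rightarrow> 'w::ab_group_add \<Rightarrow> 'w"
  assumes "finite I"
  shows "(\<lambda>t. delta (x, \<Sum>i\<in>I. sW (c i) (v i)) t - (\<Sum>i\<in>I. c i * delta (x, v i) t)) \<in> fspan (rel2 sV sW)"
  using assms
proof (induction I rule: finite_induct)
  case empty then show ?case using delta_zero_right[of x sV sW] by simp
next
  case (insert j I)
  let ?X = "\<Sum>i\<in>I. sW (c i) (v i)"
  have a: "(\<lambda>p. delta (x, sW (c j) (v j) + ?X) p - delta (x, sW (c j) (v j)) p - delta (x, ?X) p) \<in> fspan (rel2 sV sW)"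
    by (rule fspan_gen[OF rel2_I2])
  have b: "(\<lambda>p. delta (x, sW (c j) (v j)) p - c j * delta (x, v j) p) \<in> fspan (rel2 sV sW)"
    by (rule fspan_gen[OF rel2_I4])
  have "(\<lambda>p. (delta (x, sW (c j) (v j) + ?X) p - delta (x, sW (c j) (v j)) p - delta (x, ?X) p)
      + ((delta (x, sW (c j) (v j)) p - c j * delta (x, v j) p)
      + (delta (x, ?X) p - (\<Sum>i\<in>I. c i * delta (x, v i) p)))) \<in> fspan (rel2 sV sW)"
    by (rule fspan_add[OF a fspan_add[OF b insert.IH]])
  then show ?case using insert.hyps by (simp add: algebra_simps)
qed

lemma fsupp_expand: fixes F :: "'x \<Rightarrow> 'k::field" assumes "fsupp F" shows "F t = (\<Sum>u\<in>supp F. F u * delta u t)"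
proof -
  have "(\<Sum>u\<in>supp F. F u * delta u t) = (\<Sum>u\<in>supp F. if u = t then F u else 0)"
    by (rule sum.cong) (auto simp: delta_def)
  also have "\<dots> = F t" using assms by (simp add: fsupp_def sum.delta') (auto simp: supp_def)
  finally show ?thesis by simp
qed

lemma tensor_ext:
  fixes sV :: "'k::field \<Rightarrow> 'v::ab_group_add \<Rightarrow> 'v" and sW :: "'k \<Rightarrow> 'w::ab_group_add \<Rightarrow> 'w"
  assumes vV: "vector_space sV" and vW: "vector_space sW" and F: "fsupp F" and G: "fsupp G"
    and H: "\<And>B. bil sV sW (*) B \<Longrightarrow> fsumv (*) (case_prod B) F = fsumv (*) (case_prod B) G"
  shows "teq2 sV sW F G"
proof -
  interpret V: vector_space sV by fact
  interpret W: vector_space sW by fact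
  obtain BV where BV: "V.independent BV" "UNIV \<subseteq> V.span BV"
    using V.basis_exists[of UNIV] by blast
  obtain BW where BW: "W.independent BW" "UNIV \<subseteq> W.span BW"
    using W.basis_exists[of UNIV] by blast
  define rV where "rV = V.representation BV"
  define rW where "rW = W.representation BW"
  have rVadd: "rV (x + y) b = rV x b + rV y b" for x y b
  proof -
    have "V.representation BV (x + y) = (\<lambda>b. V.representation BV x b + V.representation BV y b)"
      by (rule V.representation_add[OF BV(1)]) (use BV(2) in auto)
    then show ?thesis unfolding rV_def by simp
  qed
  have rVscale: "rV (sV c x) b = c * rV x b" for c x b
  proof -
    have "V.representation BV (sV c x) = (\<lambda>b. c * V.representation BV x b)"
      by (rule V.representation_scale[OF BV(1)]) (use BV(2) in auto)
    then show ?thesis unfolding rV_def by simp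
  qed
  have rWadd: "rW (x + y) b = rW x b + rW y b" for x y b
  proof -
    have "W.representation BW (x + y) = (\<lambda>b. W.representation BW x b + W.representation BW y b)"
      by (rule W.representation_add[OF BW(1)]) (use BW(2) in auto)
    then show ?thesis unfolding rW_def by simp
  qed
  have rWscale: "rW (sW c x) b = c * rW x b" for c x b
  proof -
    have "W.representation BW (sW c x) = (\<lambda>b. c * W.representation BW x b)"
      by (rule W.representation_scale[OF BW(1)]) (use BW(2) in auto)
    then show ?thesis unfolding rW_def by simp
  qed
  have rVfin: "finite {b. rV x b \<noteq> 0}" for x unfolding rV_def by (rule V.finite_representation)
  have rWfin: "finite {b. rW x b \<noteq> 0}" for x unfolding rW_def by (rule W.finite_representation)
  have rVsum: "(\<Sum>b\<in>{b. rV x b \<noteq> 0}. sV (rV x b) b) = x" for x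
    unfolding rV_def using V.sum_nonzero_representation_eq[OF BV(1)] BV(2) by auto
  have rWsum: "(\<Sum>b\<in>{b. rW x b \<noteq> 0}. sW (rW x b) b) = x" for x
    unfolding rW_def using W.sum_nonzero_representation_eq[OF BW(1)] BW(2) by auto
  define B0 where "B0 pq x y = rV x (fst pq) * rW y (snd pq)" for pq x y
  have bilB0: "bil sV sW (*) (B0 pq)" for pq
    unfolding bil_def lin_def B0_def by (simp add: rVadd rVscale rWadd rWscale algebra_simps)
  define N where "N F' = (\<lambda>pq. fsumv (*) (case_prod (B0 pq)) F')" for F'
  have K: "(\<lambda>t. delta (x, y) t - rV x (fst t) * rW y (snd t)) \<in> fspan (rel2 sV sW)" for x y
  proof -
    let ?P = "{b. rV x b \<noteq> 0}" and ?Q = "{b. rW y b \<noteq> 0}"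
    have a: "(\<lambda>t. delta (x, y) t - (\<Sum>p\<in>?P. rV x p * delta (p, y) t)) \<in> fspan (rel2 sV sW)"
      using dl[OF rVfin[of x], where c="rV x" and v="\<lambda>p. p" and w=y and sV=sV and sW=sW] by (simp add: rVsum)
    have b: "(\<lambda>t. delta (p, y) t - (\<Sum>q\<in>?Q. rW y q * delta (p, q) t)) \<in> fspan (rel2 sV sW)" for p
      using dr[OF rWfin[of y], where c="rW y" and v="\<lambda>p. p" and x=p and sV=sV and sW=sW] by (simp add: rWsum)
    have c: "(\<lambda>t. \<Sum>p\<in>?P. rV x p * (delta (p, y) t - (\<Sum>q\<in>?Q. rW y q * delta (p, q) t))) \<in> fspan (rel2 sV sW)"
      by (rule fspan_sum[OF rVfin]) (rule fspan_scale[OF b])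
    have d: "(\<Sum>p\<in>?P. rV x p * (\<Sum>q\<in>?Q. rW y q * delta (p, q) t)) = rV x (fst t) * rW y (snd t)" for t
    proof -
      obtain a b where t: "t = (a, b)" by force
      have e: "(\<Sum>q\<in>?Q. rW y q * delta (p, q) (a, b)) = (if p = a then rW y b else 0)" for p
      proof -
        have "(\<Sum>q\<in>?Q. rW y q * delta (p, q) (a, b)) = (\<Sum>q\<in>?Q. if q = b then (if p = a then rW y q else 0) else 0)"
          by (rule sum.cong) (auto simp: delta_def)
        also have "\<dots> = (if p = a then rW y b else 0)" using rWfin[of y] by (simp add: sum.delta')
        finally show ?thesis .
      qed
      have "(\<Sum>p\<in>?P. rV x p * (\<Sum>q\<in>?Q. rW y q * delta (p, q) (a, b))) = (\<Sum>p\<in>?P. if p = a then rV x p * rW y b else 0)"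
        by (rule sum.cong) (auto simp: e)
      also have "\<dots> = rV x a * rW y b" using rVfin[of x] by (simp add: sum.delta')
      finally show ?thesis using t by simp
    qed
    have "(\<lambda>t. (delta (x, y) t - (\<Sum>p\<in>?P. rV x p * delta (p, y) t))
        + (\<Sum>p\<in>?P. rV x p * (delta (p, y) t - (\<Sum>q\<in>?Q. rW y q * delta (p, q) t)))) \<in> fspan (rel2 sV sW)"
      by (rule fspan_add[OF a c])
    moreover have "(\<lambda>t. (delta (x, y) t - (\<Sum>p\<in>?P. rV x p * delta (p, y) t))
        + (\<Sum>p\<in>?P. rV x p * (delta (p, y) t - (\<Sum>q\<in>?Q. rW y q * delta (p, q) t))))
      = (\<lambda>t. delta (x, y) t - rV x (fst t) * rW y (snd t))"
      by (rule ext) (simp add: d[symmetric] right_diff_distrib sum_subtractf)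
    ultimately show ?thesis by simp
  qed
  have NF: "N F' t = (\<Sum>u\<in>supp F'. F' u * (rV (fst u) (fst t) * rW (snd u) (snd t)))" for F' t
    by (simp add: N_def fsumv_def B0_def case_prod_beta)
  have KF: "(\<lambda>t. F' t - N F' t) \<in> fspan (rel2 sV sW)" if "fsupp F'" for F'
  proof -
    have "(\<lambda>t. \<Sum>u\<in>supp F'. F' u * (delta u t - rV (fst u) (fst t) * rW (snd u) (snd t))) \<in> fspan (rel2 sV sW)"
      using that unfolding fsupp_def
      by (intro fspan_sum fspan_scale) (use K in \<open>auto simp: case_prod_beta\<close>)
    moreover have "(\<lambda>t. \<Sum>u\<in>supp F'. F' u * (delta u t - rV (fst u) (fst t) * rW (snd u) (snd t)))
        = (\<lambda>t. F' t - N F' t)"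
    proof (rule ext)
      fix t
      have e: "(\<Sum>u\<in>supp F'. F' u * delta u t) = F' t" by (rule fsupp_expand[OF that, symmetric])
      show "(\<Sum>u\<in>supp F'. F' u * (delta u t - rV (fst u) (fst t) * rW (snd u) (snd t))) = F' t - N F' t"
        by (simp only: NF right_diff_distrib sum_subtractf e)
    qed
    ultimately show ?thesis by simp
  qed
  have NFG: "N F = N G" unfolding N_def using H[OF bilB0] by auto
  have "(\<lambda>t. (F t - N F t) - (G t - N G t)) \<in> fspan (rel2 sV sW)"
    by (rule fspan_diff[OF KF[OF F] KF[OF G]])
  then show ?thesis unfolding teq2_def NFG by simp
qed


lemma exists_functional:
  fixes s :: "'k::field \<Rightarrow> 'v::ab_group_add \<Rightarrow> 'v"
  assumes vs: "vector_space s" and x: "x \<noteq> 0"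
  shows "\<exists>f. lin s (*) f \<and> f x = 1"
proof -
  interpret vector_space_pair s "(*) :: 'k \<Rightarrow> 'k \<Rightarrow> 'k"
    by (intro vector_space_pair.intro vs vs_field)
  have "vs1.independent {x}" using x by simp
  from linear_independent_extend[OF this, of "\<lambda>_. 1"] obtain g where
    "Vector_Spaces.linear s (*) g" "g x = 1" by auto
  then show ?thesis using linear_lin by blast
qed

lemma separation:
  fixes s :: "'k::field \<Rightarrow> 'v::ab_group_add \<Rightarrow> 'v"
  assumes vs: "vector_space s" and H: "\<And>f. lin s (*) f \<Longrightarrow> f x = f y"
  shows "x = y"
proof (rule ccontr)
  assume "x \<noteq> y"
  then have "x - y \<noteq> 0" by simp
  from exists_functional[OF vs this] obtain f where f: "lin s (*) f" "f (x - y) = 1" by blast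
  then have "f x - f y = 1" by (simp add: lin_diff)
  with H[OF f(1)] show False by simp
qed

lemma fsumv_fext_delta:
  assumes vs: "vector_space s" and f: "fsupp f"
  shows "fsumv s G (fext (\<lambda>q. delta (\<phi> q)) f) = fsumv s (\<lambda>q. G (\<phi> q)) f"
  by (subst fsumv_fext[OF vs f]) (simp_all add: fsumv_delta[OF vs])

lemma map_left_alt: "map_left h f = fext (\<lambda>p. fext (\<lambda>q. delta (fst q, snd q, snd p)) (h (fst p))) f"
  unfolding map_left_def split_def ..

lemma map_right_alt: "map_right h f = fext (\<lambda>p. fext (\<lambda>q. delta (fst p, fst q, snd q)) (h (snd p))) f"
  unfolding map_right_def split_def ..

lemma tmul_alt: "tmul f g = fext (\<lambda>p. fext (\<lambda>q. delta (fst p * fst q, snd p * snd q)) g) f"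
  unfolding tmul_def ..

lemma fsupp_map_left:
  assumes "fsupp f" "\<And>a. fsupp (h a)"
  shows "fsupp (map_left h f)"
  unfolding map_left_alt by (intro fsupp_fext assms) simp

lemma fsupp_map_right:
  assumes "fsupp f" "\<And>a. fsupp (h a)"
  shows "fsupp (map_right h f)"
  unfolding map_right_alt by (intro fsupp_fext assms) simp

lemma fsumv_map_left:
  assumes vs: "vector_space s" and f: "fsupp f" and h: "\<And>a. fsupp (h a)"
  shows "fsumv s G (map_left h f) = fsumv s (\<lambda>p. fsumv s (\<lambda>q. G (fst q, snd q, snd p)) (h (fst p))) f"
  unfolding map_left_alt
  apply (subst fsumv_fext[OF vs f])
   apply (intro fsupp_fext h) apply simp
  apply (rule fsumv_cong)
  apply (rule fsumv_fext_delta[OF vs h])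
  done

lemma fsumv_map_right:
  assumes vs: "vector_space s" and f: "fsupp f" and h: "\<And>a. fsupp (h a)"
  shows "fsumv s G (map_right h f) = fsumv s (\<lambda>p. fsumv s (\<lambda>q. G (fst p, fst q, snd q)) (h (snd p))) f"
  unfolding map_right_alt
  apply (subst fsumv_fext[OF vs f])
   apply (intro fsupp_fext h) apply simp
  apply (rule fsumv_cong)
  apply (rule fsumv_fext_delta[OF vs h])
  done

lemma fsupp_tmul:
  assumes "fsupp f" "fsupp g"
  shows "fsupp (tmul f g)"
  unfolding tmul_alt by (intro fsupp_fext assms) simp

lemma fsumv_tmul:
  assumes vs: "vector_space s" and f: "fsupp f" and g: "fsupp g"
  shows "fsumv s G (tmul f g) = fsumv s (\<lambda>p. fsumv s (\<lambda>q. G (fst p * fst q, snd p * snd q)) g) f"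
  unfolding tmul_alt
  apply (subst fsumv_fext[OF vs f])
   apply (intro fsupp_fext g) apply simp
  apply (rule fsumv_cong)
  apply (rule fsumv_fext_delta[OF vs g])
  done


locale hopf_ctx =
  fixes sA :: "'k::field \<Rightarrow> 'a::ring_1 \<Rightarrow> 'a" and Delta :: "'a \<Rightarrow> ('a \<times> 'a \<Rightarrow> 'k)"
    and eps :: "'a \<Rightarrow> 'k" and S :: "'a \<Rightarrow> 'a"
  assumes vA: "vector_space sA"
    and alg1: "\<And>c x y. sA c (x * y) = sA c x * y" and alg2: "\<And>c x y. sA c (x * y) = x * sA c y"
    and Dfs: "\<And>x. fsupp (Delta x)"
    and Dadd: "\<And>x y. teq2 sA sA (Delta (x + y)) (\<lambda>p. Delta x p + Delta y p)"
    and Dscale: "\<And>c x. teq2 sA sA (Delta (sA c x)) (\<lambda>p. c * Delta x p)"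
    and coass: "\<And>a. teq3 sA sA sA (map_left Delta (Delta a)) (map_right Delta (Delta a))"
    and eps_lin: "lin sA (*) eps"
    and cu1: "\<And>a. fsumv sA (\<lambda>(x, y). sA (eps x) y) (Delta a) = a"
    and cu2: "\<And>a. fsumv sA (\<lambda>(x, y). sA (eps y) x) (Delta a) = a"
    and Dmul: "\<And>x y. teq2 sA sA (Delta (x * y)) (tmul (Delta x) (Delta y))"
    and D1: "teq2 sA sA (Delta 1) (delta (1, 1))"
    and eps_mul: "\<And>x y. eps (x * y) = eps x * eps y" and eps1: "eps 1 = 1"
    and S_lin: "lin sA sA S"
    and ant1: "\<And>a. fsumv sA (\<lambda>(x, y). S x * y) (Delta a) = sA (eps a) 1"
    and ant2: "\<And>a. fsumv sA (\<lambda>(x, y). x * S y) (Delta a) = sA (eps a) 1"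
begin

definition D :: "('k \<Rightarrow> 'v::ab_group_add \<Rightarrow> 'v) \<Rightarrow> ('a \<Rightarrow> 'a \<Rightarrow> 'v) \<Rightarrow> 'a \<Rightarrow> 'v" where
  "D s g a = fsumv s (case_prod g) (Delta a)"

lemma D_fadd: "vector_space s \<Longrightarrow> D s (\<lambda>x y. g x y + h x y) a = D s g a + D s h a"
  unfolding D_def using fsumv_gadd[of s "case_prod g" "case_prod h" "Delta a"] by (simp add: case_prod_beta')

lemma D_fdiff: "vector_space s \<Longrightarrow> D s (\<lambda>x y. g x y - h x y) a = D s g a - D s h a"
  unfolding D_def using fsumv_gdiff[of s "case_prod g" "case_prod h" "Delta a"] by (simp add: case_prod_beta')

lemma D_fscale: "vector_space s \<Longrightarrow> D s (\<lambda>x y. s c (g x y)) a = s c (D s g a)"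
  unfolding D_def using fsumv_gscale[of s c "case_prod g" "Delta a"] by (simp add: case_prod_beta')

lemma D_fzero: "vector_space s \<Longrightarrow> D s (\<lambda>x y. 0) a = 0"
  unfolding D_def using fsumv_gzero[of s "Delta a"] by (simp add: case_prod_beta')

lemma D_lin: "lin s s' L \<Longrightarrow> L (D s g a) = D s' (\<lambda>x y. L (g x y)) a"
  unfolding D_def by (simp add: fsumv_lin case_prod_beta')

lemma D_swap: "vector_space s \<Longrightarrow> D s (\<lambda>x y. D s (\<lambda>u v. G x y u v) b) a = D s (\<lambda>u v. D s (\<lambda>x y. G x y u v) a) b"
  unfolding D_def using fsumv_swap[of s "\<lambda>p q. G (fst p) (snd p) (fst q) (snd q)" "Delta b" "Delta a"]
  by (simp add: case_prod_beta')

lemma D_add_arg: assumes "vector_space s" "bil sA sA s g" shows "D s g (x + y) = D s g x + D s g y"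
proof -
  have "D s g (x + y) = fsumv s (case_prod g) (\<lambda>p. Delta x p + Delta y p)"
    unfolding D_def by (rule teq2_fsumv[OF assms Dfs _ Dadd]) (intro fsupp_add Dfs)
  also have "\<dots> = D s g x + D s g y" unfolding D_def by (rule fsumv_add[OF assms(1) Dfs Dfs])
  finally show ?thesis .
qed

lemma D_scale_arg: assumes "vector_space s" "bil sA sA s g" shows "D s g (sA c x) = s c (D s g x)"
proof -
  have "D s g (sA c x) = fsumv s (case_prod g) (\<lambda>p. c * Delta x p)"
    unfolding D_def by (rule teq2_fsumv[OF assms Dfs _ Dscale]) (intro fsupp_scale Dfs)
  also have "\<dots> = s c (D s g x)" unfolding D_def by (rule fsumv_scale[OF assms(1) Dfs])
  finally show ?thesis .
qed

lemma D_zero_arg: assumes "vector_space s" "bil sA sA s g" shows "D s g 0 = 0"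
proof -
  interpret V: vector_space s by fact
  interpret A: vector_space sA by (rule vA)
  have "D s g (sA 0 0) = s 0 (D s g 0)" by (rule D_scale_arg[OF assms])
  then show ?thesis by simp
qed

lemma D_lin_arg: "vector_space s \<Longrightarrow> bil sA sA s g \<Longrightarrow> lin sA s (D s g)"
  unfolding lin_def by (simp add: D_add_arg D_scale_arg)

lemma D_coass:
  assumes vs: "vector_space s" and g: "tri sA sA sA s g"
  shows "D s (\<lambda>x y. D s (\<lambda>p q. g p q y) x) a = D s (\<lambda>x y. D s (\<lambda>p q. g x p q) y) a"
proof -
  have "fsumv s (\<lambda>(x, y, z). g x y z) (map_left Delta (Delta a)) = fsumv s (\<lambda>(x, y, z). g x y z) (map_right Delta (Delta a))"
    by (rule teq3_fsumv[OF vs g fsupp_map_left[OF Dfs Dfs] fsupp_map_right[OF Dfs Dfs] coass])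
  then show ?thesis
    unfolding fsumv_map_left[OF vs Dfs Dfs] fsumv_map_right[OF vs Dfs Dfs] D_def
    by (simp add: case_prod_beta')
qed

lemma D_mul:
  assumes vs: "vector_space s" and g: "bil sA sA s g"
  shows "D s g (x * y) = D s (\<lambda>x1 x2. D s (\<lambda>y1 y2. g (x1 * y1) (x2 * y2)) y) x"
proof -
  have "D s g (x * y) = fsumv s (case_prod g) (tmul (Delta x) (Delta y))"
    unfolding D_def by (rule teq2_fsumv[OF vs g Dfs fsupp_tmul[OF Dfs Dfs] Dmul])
  then show ?thesis unfolding fsumv_tmul[OF vs Dfs Dfs] D_def by (simp add: case_prod_beta')
qed

lemma D_one:
  assumes vs: "vector_space s" and g: "bil sA sA s g"
  shows "D s g 1 = g 1 1"
proof -
  have "D s g 1 = fsumv s (case_prod g) (delta (1, 1))"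
    unfolding D_def by (rule teq2_fsumv[OF vs g Dfs fsupp_delta D1])
  then show ?thesis by (simp add: fsumv_delta[OF vs])
qed

lemma cu1': assumes "lin sA s h" shows "D s (\<lambda>x y. s (eps x) (h y)) a = h a"
proof -
  have "h a = h (D sA (\<lambda>x y. sA (eps x) y) a)" using cu1[of a] unfolding D_def by (simp add: case_prod_beta')
  also have "\<dots> = D s (\<lambda>x y. s (eps x) (h y)) a" by (simp add: D_lin[OF assms] lin_scale[OF assms])
  finally show ?thesis by simp
qed

lemma cu2': assumes "lin sA s h" shows "D s (\<lambda>x y. s (eps y) (h x)) a = h a"
proof -
  have "h a = h (D sA (\<lambda>x y. sA (eps y) x) a)" using cu2[of a] unfolding D_def by (simp add: case_prod_beta')
  also have "\<dots> = D s (\<lambda>x y. s (eps y) (h x)) a" by (simp add: D_lin[OF assms] lin_scale[OF assms])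
  finally show ?thesis by simp
qed

lemma ant1': assumes "lin sA s h" shows "D s (\<lambda>x y. h (S x * y)) a = s (eps a) (h 1)"
proof -
  have "h (D sA (\<lambda>x y. S x * y) a) = h (sA (eps a) 1)" using ant1[of a] unfolding D_def by (simp add: case_prod_beta')
  then show ?thesis by (simp add: D_lin[OF assms] lin_scale[OF assms])
qed

lemma ant2': assumes "lin sA s h" shows "D s (\<lambda>x y. h (x * S y)) a = s (eps a) (h 1)"
proof -
  have "h (D sA (\<lambda>x y. x * S y) a) = h (sA (eps a) 1)" using ant2[of a] unfolding D_def by (simp add: case_prod_beta')
  then show ?thesis by (simp add: D_lin[OF assms] lin_scale[OF assms])
qed

lemma lin_id: "lin s s (\<lambda>x. x)" unfolding lin_def by simp

lemma lin_mulr: "lin sA sA (\<lambda>x. x * y)" unfolding lin_def by (simp add: distrib_right alg1)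
lemma lin_mull: "lin sA sA (\<lambda>y. x * y)" unfolding lin_def by (simp add: distrib_left alg2)

end


lemma vsr:
  assumes "vector_space s"
  shows "s c (x + y) = s c x + s c y" "s (a + b) x = s a x + s b x" "s a (s b x) = s (a * b) x"
    "s 1 x = x" "s 0 x = 0" "s c 0 = 0" "s c (x - y) = s c x - s c y" "s (a - b) x = s a x - s b x"
    "s c (- x) = - s c x" "s (- a) x = - s a x"
proof -
  interpret V: vector_space s by fact
  show "s c (x + y) = s c x + s c y" "s (a + b) x = s a x + s b x" "s a (s b x) = s (a * b) x"
    "s 1 x = x" "s 0 x = 0" "s c 0 = 0" "s c (x - y) = s c x - s c y" "s (a - b) x = s a x - s b x"
    "s c (- x) = - s c x" "s (- a) x = - s a x"
    by (simp_all add: V.scale_right_distrib V.scale_left_distrib V.scale_right_diff_distrib V.scale_left_diff_distrib)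
qed

lemma linD: assumes "lin s1 s2 f" shows "f (x + y) = f x + f y" "f (s1 c x) = s2 c (f x)"
  using assms unfolding lin_def by blast+

context hopf_ctx begin

lemmas vA_rules = vsr[OF vA]
lemmas vK_rules = vsr[OF vs_field]
lemma mul_sA: "sA c x * y = sA c (x * y)" "x * sA c y = sA c (x * y)"
  using alg1 alg2 by simp_all
lemmas S_rules = linD[OF S_lin] lin_zero[OF S_lin]
lemmas eps_rules = linD[OF eps_lin] lin_zero[OF eps_lin]

end

locale hopf_haar = hopf_ctx sA Delta eps S
  for sA :: "'k::field \<Rightarrow> 'a::ring_1 \<Rightarrow> 'a" and Delta eps S +
  fixes J :: "'a \<Rightarrow> 'k"
  assumes J_lin: "lin sA (*) J"
    and J_inv: "\<And>a. fsumv sA (\<lambda>(x, y). sA (J y) x) (Delta a) = sA (J a) 1"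
    and J1: "J 1 = 1"
begin

lemmas J_rules = linD[OF J_lin] lin_zero[OF J_lin]

lemma Jinv': assumes "lin sA s g" shows "D s (\<lambda>x y. s (J y) (g x)) a = s (J a) (g 1)"
proof -
  have "g (D sA (\<lambda>x y. sA (J y) x) a) = g (sA (J a) 1)" using J_inv[of a] unfolding D_def by (simp add: case_prod_beta')
  then show ?thesis by (simp add: D_lin[OF assms] lin_scale[OF assms])
qed

definition act :: "('a \<Rightarrow> 'k) \<Rightarrow> 'a \<Rightarrow> 'a" where "act h a = D sA (\<lambda>x y. sA (h x) y) a"
definition conv :: "('a \<Rightarrow> 'k) \<Rightarrow> ('a \<Rightarrow> 'k) \<Rightarrow> 'a \<Rightarrow> 'k" where "conv h h' a = D (*) (\<lambda>x y. h x * h' y) a"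

abbreviation T where "T \<equiv> act J"

lemma act_lin: assumes h: "lin sA (*) h" shows "lin sA sA (act h)"
  unfolding act_def by (rule D_lin_arg[OF vA]) (simp add: bil_def lin_def linD[OF h] vA_rules mult.commute)

lemma L1:
  assumes vs: "vector_space s" and B: "bil sA sA s B"
  shows "D s (\<lambda>x y. B x (T y)) n = B 1 (T n)"
proof -
  note bd = bilD[OF B]
  have Bl: "lin sA s (B x)" for x using B unfolding bil_def by blast
  have Bl2: "lin sA s (\<lambda>x. B x y)" for y using B unfolding bil_def by blast
  have "D s (\<lambda>x y. B x (T y)) n = D s (\<lambda>x y. D s (\<lambda>p q. B x (sA (J p) q)) y) n"
    unfolding act_def by (simp add: D_lin[OF Bl])
  also have "\<dots> = D s (\<lambda>x y. D s (\<lambda>p q. B p (sA (J q) y)) x) n"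
    by (rule D_coass[OF vs, symmetric]) (simp add: tri_def lin_def bd vA_rules J_rules vsr[OF vs] mult.commute)
  also have "\<dots> = D s (\<lambda>x y. s (J x) (B 1 y)) n"
    using Jinv'[OF Bl2] by (simp add: bd)
  also have "\<dots> = B 1 (T n)"
    unfolding act_def by (simp add: D_lin[OF Bl] bd)
  finally show ?thesis .
qed

end

context hopf_ctx begin

lemmas LS = tri_def bil_def lin_def mult.commute vA_rules mul_sA S_rules eps_rules distrib_left distrib_right mult.assoc

lemma DS_i:
  assumes vs: "vector_space s" and K: "bil sA sA s K"
  shows "D s (\<lambda>c1 r. D s (\<lambda>m c4. D s (\<lambda>c2 c3. K (c1 * S c4) (c2 * S c3)) m) r) c = s (eps c) (K 1 1)"
proof -
  note kd = bilD[OF K]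
  have Kl: "lin sA s (K x)" for x using K unfolding bil_def by blast
  have Kl2: "lin sA s (\<lambda>x. K x y)" for y using K unfolding bil_def by blast
  have i1: "D s (\<lambda>c2 c3. K (c1 * S c4) (c2 * S c3)) m = s (eps m) (K (c1 * S c4) 1)" for c1 c4 m
  proof -
    have "D s (\<lambda>c2 c3. K (c1 * S c4) (c2 * S c3)) m = K (c1 * S c4) (D sA (\<lambda>c2 c3. c2 * S c3) m)"
      by (simp add: D_lin[OF Kl])
    also have "\<dots> = s (eps m) (K (c1 * S c4) 1)"
      using ant2[of m] unfolding D_def by (simp add: case_prod_beta' kd)
    finally show ?thesis .
  qed
  have i2: "D s (\<lambda>m c4. s (eps m) (K (c1 * S c4) 1)) r = K (c1 * S r) 1" for c1 r
    by (rule cu1') (simp add: lin_def S_rules kd distrib_left mul_sA)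
  have "D s (\<lambda>c1 r. D s (\<lambda>m c4. D s (\<lambda>c2 c3. K (c1 * S c4) (c2 * S c3)) m) r) c
      = D s (\<lambda>c1 r. K (c1 * S r) 1) c" by (simp add: i1 i2)
  also have "\<dots> = K (D sA (\<lambda>c1 r. c1 * S r) c) 1" by (simp add: D_lin[OF Kl2])
  also have "\<dots> = s (eps c) (K 1 1)" using ant2[of c] unfolding D_def by (simp add: case_prod_beta' kd)
  finally show ?thesis .
qed

lemma DS:
  assumes vs: "vector_space s" and G: "bil sA sA s G"
  shows "D s G (S a) = D s (\<lambda>p q. G (S q) (S p)) a"
proof -
  note gd = bilD[OF G]
  note vs_r = vsr[OF vs]
  define X where "X c4 c3 c2 c1 a1 = D s (\<lambda>u v. G (u * (c1 * S c4)) (v * (c2 * S c3))) (S a1)" for a1 c1 c2 c3 c4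
  have bX: "bil sA sA s (\<lambda>u v. G (u * (c1 * S c4)) (v * (c2 * S c3)))" for c1 c2 c3 c4
    by (simp add: LS gd vs_r)
  have Xr: "X c4 c3 c2 c1 (x + y) = X c4 c3 c2 c1 x + X c4 c3 c2 c1 y"
    "X c4 c3 c2 c1 (sA c x) = s c (X c4 c3 c2 c1 x)"
    "X c4 c3 c2 (x + y) a1 = X c4 c3 c2 x a1 + X c4 c3 c2 y a1"
    "X c4 c3 c2 (sA c x) a1 = s c (X c4 c3 c2 x a1)"
    "X c4 c3 (x + y) c1 a1 = X c4 c3 x c1 a1 + X c4 c3 y c1 a1"
    "X c4 c3 (sA c x) c1 a1 = s c (X c4 c3 x c1 a1)"
    "X c4 (x + y) c2 c1 a1 = X c4 x c2 c1 a1 + X c4 y c2 c1 a1"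
    "X c4 (sA c x) c2 c1 a1 = s c (X c4 x c2 c1 a1)"
    "X (x + y) c3 c2 c1 a1 = X x c3 c2 c1 a1 + X y c3 c2 c1 a1"
    "X (sA c x) c3 c2 c1 a1 = s c (X x c3 c2 c1 a1)"
    for a1 c1 c2 c3 c4 x y c
    unfolding X_def
    by (simp_all add: S_rules D_add_arg[OF vs bX] D_scale_arg[OF vs bX] distrib_left distrib_right mul_sA
        gd vs_r D_fadd[OF vs] D_fscale[OF vs])
  note R = Xr D_add_arg[OF vs] D_scale_arg[OF vs] D_fadd[OF vs] D_fscale[OF vs] vs_r bil_def lin_def tri_def
  have s0: "D s G (S a) = D s (\<lambda>a1 a2. s (eps a2) (D s G (S a1))) a"
    by (rule cu2'[symmetric]) (simp add: LS D_add_arg[OF vs G] D_scale_arg[OF vs G])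
  have s1: "s (eps a2) (D s G (S a1)) = D s (\<lambda>c1 r. D s (\<lambda>m c4. D s (\<lambda>c2 c3. X c4 c3 c2 c1 a1) m) r) a2" for a1 a2
  proof -
    have "bil sA sA s (\<lambda>q1 q2. D s (\<lambda>u v. G (u * q1) (v * q2)) (S a1))"
      by (simp add: LS D_add_arg[OF vs] D_scale_arg[OF vs] D_fadd[OF vs] D_fscale[OF vs] gd vs_r)
    from DS_i[OF vs this, of a2] show ?thesis unfolding X_def by simp
  qed
  have r1: "D s (\<lambda>m c4. D s (\<lambda>c2 c3. X c4 c3 c2 c1 a1) m) r = D s (\<lambda>c2 t. D s (\<lambda>c3 c4. X c4 c3 c2 c1 a1) t) r"
    for a1 c1 r by (rule D_coass[OF vs]) (simp add: R)
  have r2: "D s (\<lambda>c1 r. D s (\<lambda>c2 t. D s (\<lambda>c3 c4. X c4 c3 c2 c1 a1) t) r) a2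
      = D s (\<lambda>b t. D s (\<lambda>c1 c2. D s (\<lambda>c3 c4. X c4 c3 c2 c1 a1) t) b) a2"
    for a1 a2 by (rule D_coass[OF vs, symmetric]) (simp add: R)
  have r3: "D s (\<lambda>a1 a2. D s (\<lambda>b t. D s (\<lambda>c1 c2. D s (\<lambda>c3 c4. X c4 c3 c2 c1 a1) t) b) a2) a
      = D s (\<lambda>e t. D s (\<lambda>a1 b. D s (\<lambda>c1 c2. D s (\<lambda>c3 c4. X c4 c3 c2 c1 a1) t) b) e) a"
    by (rule D_coass[OF vs, symmetric]) (simp add: R)
  define H where "H t x y = D s (\<lambda>c3 c4. G (x * S c4) (y * S c3)) t" for t x y
  have bH: "bil sA sA s (H t)" for t unfolding H_def
    by (simp add: LS D_add_arg[OF vs] D_scale_arg[OF vs] D_fadd[OF vs] D_fscale[OF vs] gd vs_r)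
  have r4: "D s (\<lambda>c1 c2. D s (\<lambda>c3 c4. X c4 c3 c2 c1 a1) t) b = D s (H t) (S a1 * b)" for a1 b t
  proof -
    have "D s (\<lambda>c1 c2. D s (\<lambda>c3 c4. X c4 c3 c2 c1 a1) t) b
        = D s (\<lambda>c1 c2. D s (\<lambda>c3 c4. D s (\<lambda>u v. G (u * c1 * S c4) (v * c2 * S c3)) (S a1)) t) b"
      unfolding X_def by (simp add: mult.assoc)
    also have "\<dots> = D s (\<lambda>c1 c2. D s (\<lambda>u v. D s (\<lambda>c3 c4. G (u * c1 * S c4) (v * c2 * S c3)) t) (S a1)) b"
      by (rule arg_cong[where f="\<lambda>F. D s F b"], rule ext, rule ext, rule D_swap[OF vs])
    also have "\<dots> = D s (\<lambda>u v. D s (\<lambda>c1 c2. D s (\<lambda>c3 c4. G (u * c1 * S c4) (v * c2 * S c3)) t) b) (S a1)"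
      by (rule D_swap[OF vs])
    also have "\<dots> = D s (H t) (S a1 * b)"
      unfolding D_mul[OF vs bH] H_def by simp
    finally show ?thesis .
  qed
  have r4': "D s (\<lambda>c1 c2. D s (\<lambda>c3 c4. X c4 c3 c2 c1 a1) t) = (\<lambda>b. D s (H t) (S a1 * b))" for a1 t
    using r4 by (simp add: fun_eq_iff)
  have r5: "D s (\<lambda>a1 b. D s (H t) (S a1 * b)) e = s (eps e) (D s (\<lambda>c3 c4. G (S c4) (S c3)) t)" for e t
  proof -
    have "D s (\<lambda>a1 b. D s (H t) (S a1 * b)) e = s (eps e) (D s (H t) 1)"
      by (rule ant1'[OF D_lin_arg[OF vs bH]])
    then show ?thesis unfolding D_one[OF vs bH] H_def by simp
  qed
  have "D s G (S a) = D s (\<lambda>a1 a2. D s (\<lambda>c1 r. D s (\<lambda>m c4. D s (\<lambda>c2 c3. X c4 c3 c2 c1 a1) m) r) a2) a"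
    unfolding s0 s1 ..
  also have "\<dots> = D s (\<lambda>e t. s (eps e) (D s (\<lambda>c3 c4. G (S c4) (S c3)) t)) a"
    unfolding r1 r2 by (subst r3) (simp only: r4' r5)
  also have "\<dots> = D s (\<lambda>p q. G (S q) (S p)) a"
    by (rule cu1') (simp add: LS D_add_arg[OF vs] D_scale_arg[OF vs] D_fadd[OF vs] D_fscale[OF vs] gd vs_r)
  finally show ?thesis .
qed

end

context hopf_haar begin

lemmas LSJ = LS J_rules

lemma I_vec: "D sA (\<lambda>p q. sA (J (q * S y)) p) x = D sA (\<lambda>p q. sA (J (x * S p)) q) y"
proof -
  note vs = vA
  have Jw: "D sA (\<lambda>u v. sA (J v) u) w = sA (J w) 1" for w
    using J_inv[of w] unfolding D_def by (simp add: case_prod_beta')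
  have a: "sA (J w) q = D sA (\<lambda>u v. sA (J v) (u * q)) w" for w q
  proof -
    have "sA (J w) q = (sA (J w) 1) * q" by (simp add: mul_sA)
    also have "\<dots> = D sA (\<lambda>u v. sA (J v) u * q) w" by (simp add: Jw[symmetric] D_lin[OF lin_mulr])
    finally show ?thesis by (simp add: mul_sA)
  qed
  have bPhi: "bil sA sA sA (\<lambda>u v. sA (J v) (u * q))" for q by (simp add: LSJ)
  have b: "D sA (\<lambda>u v. sA (J v) (u * q)) (x * S p)
      = D sA (\<lambda>x1 x2. D sA (\<lambda>p1 p2. sA (J (x2 * S p1)) (x1 * S p2 * q)) p) x" for p q
  proof -
    have "D sA (\<lambda>u v. sA (J v) (u * q)) (x * S p)
        = D sA (\<lambda>x1 x2. D sA (\<lambda>s1 s2. sA (J (x2 * s2)) (x1 * s1 * q)) (S p)) x"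
      by (simp add: D_mul[OF vs bPhi])
    also have "\<dots> = D sA (\<lambda>x1 x2. D sA (\<lambda>p1 p2. sA (J (x2 * S p1)) (x1 * S p2 * q)) p) x"
      by (rule arg_cong[where f="\<lambda>F. D sA F x"], rule ext, rule ext, rule DS[OF vs]) (simp add: LSJ)
    finally show ?thesis .
  qed
  have d: "D sA (\<lambda>p q. D sA (\<lambda>p1 p2. sA (J (x2 * S p1)) (x1 * S p2 * q)) p) y = sA (J (x2 * S y)) x1" for x1 x2
  proof -
    have "D sA (\<lambda>p q. D sA (\<lambda>p1 p2. sA (J (x2 * S p1)) (x1 * S p2 * q)) p) y
        = D sA (\<lambda>p1 r. D sA (\<lambda>p2 q. sA (J (x2 * S p1)) (x1 * S p2 * q)) r) y"
      by (rule D_coass[OF vs]) (simp add: LSJ)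
    also have "\<dots> = D sA (\<lambda>p1 r. sA (eps r) (sA (J (x2 * S p1)) x1)) y"
    proof -
      have "D sA (\<lambda>p2 q. sA c (x1 * S p2 * q)) r = sA (eps r) (sA c x1)" for c r
      proof -
        have "D sA (\<lambda>p2 q. sA c (x1 * (S p2 * q))) r = sA (eps r) (sA c (x1 * 1))"
          by (rule ant1') (simp add: LS)
        then show ?thesis by (simp add: mult.assoc)
      qed
      then show ?thesis by simp
    qed
    also have "\<dots> = sA (J (x2 * S y)) x1"
      by (rule cu2') (simp add: LSJ)
    finally show ?thesis .
  qed
  have "D sA (\<lambda>p q. sA (J (x * S p)) q) y
      = D sA (\<lambda>p q. D sA (\<lambda>x1 x2. D sA (\<lambda>p1 p2. sA (J (x2 * S p1)) (x1 * S p2 * q)) p) x) y"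
  proof -
    have a': "(\<lambda>p q. sA (J (x * S p)) q) = (\<lambda>p q. D sA (\<lambda>u v. sA (J v) (u * q)) (x * S p))"
      by (simp add: fun_eq_iff a[symmetric])
    show ?thesis unfolding a' by (simp only: b)
  qed
  also have "\<dots> = D sA (\<lambda>x1 x2. D sA (\<lambda>p q. D sA (\<lambda>p1 p2. sA (J (x2 * S p1)) (x1 * S p2 * q)) p) y) x"
    by (rule D_swap[OF vs])
  also have "\<dots> = D sA (\<lambda>p q. sA (J (q * S y)) p) x"
    by (simp add: d)
  finally show ?thesis by simp
qed

lemma I_h:
  assumes g: "lin sA (*) g"
  shows "D (*) (\<lambda>p q. g p * J (q * S y)) x = D (*) (\<lambda>p q. J (x * S p) * g q) y"
proof -
  have "g (D sA (\<lambda>p q. sA (J (q * S y)) p) x) = g (D sA (\<lambda>p q. sA (J (x * S p)) q) y)"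
    by (simp add: I_vec)
  then show ?thesis by (simp add: D_lin[OF g] lin_scale[OF g] mult.commute)
qed

end

context hopf_ctx begin

lemma D_eta:
  assumes vs: "vector_space s"
  shows "D s (\<lambda>x. s (f x + g x)) a = D s (\<lambda>x. s (f x)) a + D s (\<lambda>x. s (g x)) a"
    "D s (\<lambda>x. s (f x - g x)) a = D s (\<lambda>x. s (f x)) a - D s (\<lambda>x. s (g x)) a"
    "D s (\<lambda>x. s (c * f x)) a = s c (D s (\<lambda>x. s (f x)) a)"
    "D s (\<lambda>x. s 0) a = 0"
proof -
  have e1: "(\<lambda>x. s (f x + g x)) = (\<lambda>x y. s (f x) y + s (g x) y)" by (simp add: fun_eq_iff vsr[OF vs])
  have e2: "(\<lambda>x. s (f x - g x)) = (\<lambda>x y. s (f x) y - s (g x) y)" by (simp add: fun_eq_iff vsr[OF vs])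
  have e3: "(\<lambda>x. s (c * f x)) = (\<lambda>x y. s c (s (f x) y))" by (simp add: fun_eq_iff vsr[OF vs])
  have e4: "(\<lambda>x. s 0) = (\<lambda>x y. 0)" by (simp add: fun_eq_iff vsr[OF vs])
  show "D s (\<lambda>x. s (f x + g x)) a = D s (\<lambda>x. s (f x)) a + D s (\<lambda>x. s (g x)) a"
    unfolding e1 by (rule D_fadd[OF vs])
  show "D s (\<lambda>x. s (f x - g x)) a = D s (\<lambda>x. s (f x)) a - D s (\<lambda>x. s (g x)) a"
    unfolding e2 by (rule D_fdiff[OF vs])
  show "D s (\<lambda>x. s (c * f x)) a = s c (D s (\<lambda>x. s (f x)) a)"
    unfolding e3 by (rule D_fscale[OF vs])
  show "D s (\<lambda>x. s 0) a = 0"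
    unfolding e4 by (rule D_fzero[OF vs])
qed

end

context hopf_haar begin

lemmas LSJ' = LSJ mult.left_commute D_eta[OF vA] D_zero_arg[OF vA]

lemma sA_D: "sA (D (*) G x) = (\<lambda>y. D sA (\<lambda>p q. sA (G p q) y) x)"
proof
  fix y
  have l: "lin (*) sA (\<lambda>c. sA c y)" by (simp add: lin_def vA_rules)
  show "sA (D (*) G x) y = D sA (\<lambda>p q. sA (G p q) y) x" by (rule D_lin[OF l])
qed

lemma lin_scl: "lin (*) sA (\<lambda>c. sA c y)" by (simp add: lin_def vA_rules)
lemma lin_sAc: "lin sA sA (\<lambda>y. sA c y)" by (simp add: lin_def vA_rules mult.commute)

lemma act_act:
  assumes h: "lin sA (*) h" and h': "lin sA (*) h'"
  shows "act h' (act h a) = act (conv h h') a"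
proof -
  note hr = linD[OF h] lin_zero[OF h] and hr' = linD[OF h'] lin_zero[OF h']
  have "act h' (act h a) = D sA (\<lambda>x y. sA (h x) (act h' y)) a"
    unfolding act_def[of h] by (simp add: D_lin[OF act_lin[OF h']] lin_scale[OF act_lin[OF h']])
  also have "\<dots> = D sA (\<lambda>x y. D sA (\<lambda>p q. sA (h x) (sA (h' p) q)) y) a"
    unfolding act_def by (simp add: D_fscale[OF vA])
  also have "\<dots> = D sA (\<lambda>x y. D sA (\<lambda>p q. sA (h p) (sA (h' q) y)) x) a"
    by (rule D_coass[OF vA, symmetric]) (simp add: LSJ' hr hr')
  also have "\<dots> = act (conv h h') a"
    unfolding act_def conv_def by (simp add: sA_D vA_rules)
  finally show ?thesis .
qed

lemma conv_J: assumes h: "lin sA (*) h" shows "conv h J a = h 1 * J a"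
  unfolding conv_def using Jinv'[OF h, of a] by (simp add: mult.commute)

lemma eps_act: assumes g: "lin sA (*) g" shows "eps (act g a) = g a"
  unfolding act_def using cu2'[OF g, of a]
  by (simp add: D_lin[OF eps_lin] eps_rules mult.commute)

lemma conv_lin: assumes h: "lin sA (*) h" and h': "lin sA (*) h'" shows "lin sA (*) (conv h h')"
proof -
  note hr = linD[OF h] lin_zero[OF h] and hr' = linD[OF h'] lin_zero[OF h']
  show ?thesis unfolding conv_def fun_eq_iff[symmetric]
    by (rule D_lin_arg[OF vs_field]) (simp add: LS hr hr' algebra_simps)
qed

lemma act_cong: assumes "\<And>x. h x = h' x" shows "act h a = act h' a"
proof -
  have "h = h'" using assms by (rule ext)
  then show ?thesis by simp
qed

lemma act_zero_fun: "act (\<lambda>x. 0) a = 0"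
  unfolding act_def by (simp add: vA_rules D_eta[OF vA])

lemma TT: "T (T y) = T y"
proof -
  have "T (T y) = act (conv J J) y" by (rule act_act[OF J_lin J_lin])
  also have "\<dots> = T y" by (rule act_cong) (simp add: conv_J[OF J_lin] J1)
  finally show ?thesis .
qed

definition R :: "'a \<Rightarrow> 'a \<Rightarrow> 'a" where "R x m = D sA (\<lambda>u v. sA (J (x * S u)) v) m"
definition Q :: "'a \<Rightarrow> 'a \<Rightarrow> 'a" where "Q x y = R x y - R x (T y)"
definition pi :: "'a \<Rightarrow> 'a" where "pi a = D sA Q a"

lemma T_lin: "lin sA sA T" by (rule act_lin[OF J_lin])
lemmas T_rules = linD[OF T_lin] lin_zero[OF T_lin] lin_diff[OF T_lin]

lemma bil_R0: "bil sA sA sA (\<lambda>u v. sA (J (x * S u)) v)" by (simp add: LSJ')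

lemma bil_R: "bil sA sA sA R"
  unfolding R_def by (simp add: LSJ' D_add_arg[OF vA] D_scale_arg[OF vA] D_fadd[OF vA] D_fscale[OF vA])

lemmas R_rules = bilD[OF bil_R]

lemma bil_Q: "bil sA sA sA Q"
  unfolding Q_def by (simp add: bil_def lin_def R_rules T_rules vA_rules)

lemma pi_lin: "lin sA sA pi"
  unfolding pi_def fun_eq_iff[symmetric] by (rule D_lin_arg[OF vA bil_Q])

lemma pi1: "T (pi a) = 0"
proof -
  have TR: "T (R x m) = sA (J (x * S 1)) (T m)" for x m
  proof -
    have "T (R x m) = D sA (\<lambda>u v. sA (J (x * S u)) (T v)) m"
      unfolding R_def by (simp add: D_lin[OF T_lin] T_rules)
    also have "\<dots> = sA (J (x * S 1)) (T m)"
      by (rule L1[OF vA]) (simp add: LSJ')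
    finally show ?thesis .
  qed
  have "T (pi a) = D sA (\<lambda>x y. T (Q x y)) a" unfolding pi_def by (simp add: D_lin[OF T_lin])
  also have "\<dots> = D sA (\<lambda>x y. 0) a" unfolding Q_def by (simp add: T_rules TR TT vA_rules)
  also have "\<dots> = 0" by (rule D_fzero[OF vA])
  finally show ?thesis .
qed

lemma pi2: assumes u: "T u = 0" shows "pi u = u"
proof -
  have e1: "D sA (\<lambda>x y. R x (T y)) u = 0"
    using L1[OF vA bil_R, of u] u by (simp add: R_def LSJ')
  have e2: "D sA R u = u"
  proof -
    have "D sA R u = D sA (\<lambda>x y. D sA (\<lambda>s v. sA (J (x * S s)) v) y) u" unfolding R_def ..
    also have "\<dots> = D sA (\<lambda>x v. D sA (\<lambda>p s. sA (J (p * S s)) v) x) u"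
      by (rule D_coass[OF vA, symmetric]) (simp add: LSJ')
    also have "\<dots> = D sA (\<lambda>x v. sA (eps x) v) u"
    proof -
      have "D sA (\<lambda>p s. sA (J (p * S s)) v) x = sA (eps x) (sA (J 1) v)" for x v
        by (rule ant2') (simp add: LSJ')
      then show ?thesis by (simp add: J1 vA_rules)
    qed
    also have "\<dots> = u" by (rule cu1'[OF lin_id])
    finally show ?thesis .
  qed
  show ?thesis unfolding pi_def Q_def D_fdiff[OF vA] e1 e2 by simp
qed

lemma pi3: assumes g: "lin sA (*) g" shows "pi (act g a) = act g (pi a)"
proof -
  note gr = linD[OF g] lin_zero[OF g]
  have inner: "D sA (\<lambda>p q. sA (g p) (Q q y)) x = act g (Q x y)" for x y
  proof -
    define n where "n = y - T y"
    have Qn: "Q q y = R q n" for q unfolding Q_def n_def by (simp add: R_rules bilD[OF bil_R] lin_diff[OF D_lin_arg[OF vA bil_R0]] R_def)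
    have "D sA (\<lambda>p q. sA (g p) (Q q y)) x = D sA (\<lambda>p q. D sA (\<lambda>u v. sA (g p) (sA (J (q * S u)) v)) n) x"
      unfolding Qn R_def by (simp add: D_fscale[OF vA])
    also have "\<dots> = D sA (\<lambda>u v. D sA (\<lambda>p q. sA (g p) (sA (J (q * S u)) v)) x) n"
      by (rule D_swap[OF vA])
    also have "\<dots> = D sA (\<lambda>u v. D sA (\<lambda>p q. sA (J (x * S p) * g q) v) u) n"
    proof -
      have "D sA (\<lambda>p q. sA (g p) (sA (J (q * S u)) v)) x = D sA (\<lambda>p q. sA (J (x * S p) * g q) v) u" for u v
      proof -
        have "D sA (\<lambda>p q. sA (g p) (sA (J (q * S u)) v)) x = sA (D (*) (\<lambda>p q. g p * J (q * S u)) x) v"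
          by (simp add: D_lin[OF lin_scl] vA_rules)
        also have "\<dots> = sA (D (*) (\<lambda>p q. J (x * S p) * g q) u) v" by (simp add: I_h[OF g])
        also have "\<dots> = D sA (\<lambda>p q. sA (J (x * S p) * g q) v) u" by (simp add: D_lin[OF lin_scl])
        finally show ?thesis .
      qed
      then show ?thesis by simp
    qed
    also have "\<dots> = D sA (\<lambda>u v. D sA (\<lambda>p q. sA (J (x * S u) * g p) q) v) n"
      by (rule D_coass[OF vA]) (simp add: LSJ' gr)
    also have "\<dots> = D sA (\<lambda>u v. sA (J (x * S u)) (act g v)) n"
    proof -
      have e: "D sA (\<lambda>p. sA (c * g p)) = (\<lambda>v. sA c (act g v))" for c
        unfolding act_def by (simp add: fun_eq_iff D_eta[OF vA])
      show ?thesis by (simp only: e)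
    qed
    also have "\<dots> = act g (Q x y)"
      unfolding Qn R_def by (simp add: D_lin[OF act_lin[OF g]] lin_scale[OF act_lin[OF g]])
    finally show ?thesis .
  qed
  have "pi (act g a) = D sA (\<lambda>x y. sA (g x) (pi y)) a"
    unfolding act_def[of g a] by (simp add: D_lin[OF pi_lin] lin_scale[OF pi_lin])
  also have "\<dots> = D sA (\<lambda>x y. D sA (\<lambda>p q. sA (g x) (Q p q)) y) a"
    unfolding pi_def by (simp add: D_fscale[OF vA])
  also have "\<dots> = D sA (\<lambda>x y. D sA (\<lambda>p q. sA (g p) (Q q y)) x) a"
    by (rule D_coass[OF vA, symmetric]) (simp add: LSJ' gr bilD[OF bil_Q])
  also have "\<dots> = D sA (\<lambda>x y. act g (Q x y)) a" by (simp add: inner)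
  also have "\<dots> = act g (pi a)" unfolding pi_def by (simp add: D_lin[OF act_lin[OF g]])
  finally show ?thesis .
qed

lemma right_inv0:
  assumes h: "lin sA (*) h" and h1: "h 1 = 0"
  shows "conv J h a = 0"
proof -
  define g where "g = conv J h"
  have g: "lin sA (*) g" unfolding g_def by (rule conv_lin[OF J_lin h])
  have g1: "g 1 = 0"
  proof -
    have "g 1 = J 1 * h 1" unfolding g_def conv_def
      by (rule D_one[OF vs_field]) (simp add: LSJ' linD[OF h] algebra_simps)
    then show ?thesis using h1 by simp
  qed
  have Tg: "T (act g b) = 0" for b
  proof -
    have "T (act g b) = act (conv g J) b" by (rule act_act[OF g J_lin])
    also have "\<dots> = act (\<lambda>x. 0) b" by (rule act_cong) (simp add: conv_J[OF g] g1)
    finally show ?thesis by (simp add: act_zero_fun)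
  qed
  have "act g a = pi (act g a)" by (rule pi2[OF Tg, symmetric])
  also have "\<dots> = act g (pi a)" by (rule pi3[OF g])
  also have "\<dots> = act h (T (pi a))" unfolding g_def by (rule act_act[OF J_lin h, symmetric])
  also have "\<dots> = 0" by (simp add: pi1 lin_zero[OF act_lin[OF h]])
  finally have "act g a = 0" .
  then have "g a = 0" using eps_act[OF g, of a] by (simp add: eps_rules)
  then show ?thesis unfolding g_def .
qed

lemma right_inv_scalar:
  assumes h: "lin sA (*) h"
  shows "conv J h a = J a * h 1"
proof -
  define h' where "h' x = h x - h 1 * eps x" for x
  have h': "lin sA (*) h'" unfolding h'_def lin_def by (simp add: linD[OF h] eps_rules algebra_simps)
  have "conv J h' a = 0" by (rule right_inv0[OF h']) (simp add: h'_def eps1)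
  moreover have "conv J h' a = conv J h a - h 1 * conv J eps a"
    unfolding conv_def h'_def by (simp add: algebra_simps D_fdiff[OF vs_field] D_fscale[OF vs_field, symmetric])
  moreover have "conv J eps a = J a"
    unfolding conv_def using cu2'[OF J_lin, of a] by (simp add: mult.commute)
  ultimately show ?thesis by (simp add: mult.commute)
qed

lemma right_inv: "T a = sA (J a) 1"
proof (rule separation[OF vA])
  fix f :: "'a \<Rightarrow> 'k" assume f: "lin sA (*) f"
  have "f (T a) = conv J f a" unfolding act_def conv_def by (simp add: D_lin[OF f] lin_scale[OF f])
  also have "\<dots> = J a * f 1" by (rule right_inv_scalar[OF f])
  also have "\<dots> = f (sA (J a) 1)" by (simp add: lin_scale[OF f])
  finally show "f (T a) = f (sA (J a) 1)" .
qed

end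


lemma lin_linear:
  assumes "vector_space s1" "vector_space s2" "lin s1 s2 f"
  shows "Vector_Spaces.linear s1 s2 f"
  using assms by (simp add: module_hom_iff_linear[symmetric] module_hom_iff module_iff_vector_space lin_def)

locale comod = hopf_haar sA Delta eps S J
  for sA :: "'k::field \<Rightarrow> 'a::ring_1 \<Rightarrow> 'a" and Delta eps S J +
  fixes sZ :: "'k \<Rightarrow> 'z::ring_1 \<Rightarrow> 'z" and alpha :: "'z \<Rightarrow> ('a \<times> 'z \<Rightarrow> 'k)"
  assumes vZ: "vector_space sZ"
    and algZ1: "\<And>c x y. sZ c (x * y) = sZ c x * y" and algZ2: "\<And>c x y. sZ c (x * y) = x * sZ c y"
    and afs: "\<And>z. fsupp (alpha z)"
    and aadd: "\<And>x y. teq2 sA sZ (alpha (x + y)) (\<lambda>p. alpha x p + alpha y p)"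
    and ascale: "\<And>c x. teq2 sA sZ (alpha (sZ c x)) (\<lambda>p. c * alpha x p)"
    and acoass: "\<And>z. teq3 sA sA sZ (map_left Delta (alpha z)) (map_right alpha (alpha z))"
    and acu: "\<And>z. fsumv sZ (\<lambda>(a, w). sZ (eps a) w) (alpha z) = z"
    and a1: "teq2 sA sZ (alpha 1) (delta (1, 1))"
    and ginj: "\<And>F G. fsupp F \<Longrightarrow> fsupp G \<Longrightarrow> teq2 sA sZ (galois_map alpha F) (galois_map alpha G) \<Longrightarrow> teq2 sZ sZ F G"
begin

definition C :: "('k \<Rightarrow> 'v::ab_group_add \<Rightarrow> 'v) \<Rightarrow> ('a \<Rightarrow> 'z \<Rightarrow> 'v) \<Rightarrow> 'z \<Rightarrow> 'v" where
  "C s g z = fsumv s (case_prod g) (alpha z)"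

lemmas vZ_rules = vsr[OF vZ]
lemma mul_sZ: "sZ c x * y = sZ c (x * y)" "x * sZ c y = sZ c (x * y)"
  using algZ1 algZ2 by simp_all

lemma C_fscale: "vector_space s \<Longrightarrow> C s (\<lambda>x y. s c (g x y)) a = s c (C s g a)"
  unfolding C_def using fsumv_gscale[of s c "case_prod g" "alpha a"] by (simp add: case_prod_beta')

lemma C_lin: "lin s s' L \<Longrightarrow> L (C s g a) = C s' (\<lambda>x y. L (g x y)) a"
  unfolding C_def by (simp add: fsumv_lin case_prod_beta')

lemma C_add_arg: assumes "vector_space s" "bil sA sZ s g" shows "C s g (x + y) = C s g x + C s g y"
proof -
  have "C s g (x + y) = fsumv s (case_prod g) (\<lambda>p. alpha x p + alpha y p)"
    unfolding C_def by (rule teq2_fsumv[OF assms afs _ aadd]) (intro fsupp_add afs)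
  also have "\<dots> = C s g x + C s g y" unfolding C_def by (rule fsumv_add[OF assms(1) afs afs])
  finally show ?thesis .
qed

lemma C_scale_arg: assumes "vector_space s" "bil sA sZ s g" shows "C s g (sZ c x) = s c (C s g x)"
proof -
  have "C s g (sZ c x) = fsumv s (case_prod g) (\<lambda>p. c * alpha x p)"
    unfolding C_def by (rule teq2_fsumv[OF assms afs _ ascale]) (intro fsupp_scale afs)
  also have "\<dots> = s c (C s g x)" unfolding C_def by (rule fsumv_scale[OF assms(1) afs])
  finally show ?thesis .
qed

lemma C_lin_arg: "vector_space s \<Longrightarrow> bil sA sZ s g \<Longrightarrow> lin sZ s (C s g)"
  unfolding lin_def by (simp add: C_add_arg C_scale_arg)

lemma C_coass:
  assumes vs: "vector_space s" and g: "tri sA sA sZ s g"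
  shows "C s (\<lambda>x w. D s (\<lambda>p q. g p q w) x) z = C s (\<lambda>x w. C s (\<lambda>p q. g x p q) w) z"
proof -
  have "fsumv s (\<lambda>(x, y, z). g x y z) (map_left Delta (alpha z)) = fsumv s (\<lambda>(x, y, z). g x y z) (map_right alpha (alpha z))"
    by (rule teq3_fsumv[OF vs g fsupp_map_left[OF afs Dfs] fsupp_map_right[OF afs afs] acoass])
  then show ?thesis
    unfolding fsumv_map_left[OF vs afs Dfs] fsumv_map_right[OF vs afs afs] D_def C_def
    by (simp add: case_prod_beta')
qed

lemma C_one:
  assumes vs: "vector_space s" and g: "bil sA sZ s g"
  shows "C s g 1 = g 1 1"
proof -
  have "C s g 1 = fsumv s (case_prod g) (delta (1, 1))"
    unfolding C_def by (rule teq2_fsumv[OF vs g afs fsupp_delta a1])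
  then show ?thesis by (simp add: fsumv_delta[OF vs])
qed

lemma sA_C: "sA (C (*) G w) a = C sA (\<lambda>b u. sA (G b u) a) w"
proof -
  have l: "lin (*) sA (\<lambda>c. sA c a)" by (simp add: lin_def vA_rules)
  show ?thesis by (rule C_lin[OF l])
qed

definition P :: "'z \<Rightarrow> 'z" where "P z = C sZ (\<lambda>a w. sZ (J a) w) z"

lemma P_lin: "lin sZ sZ P"
  unfolding P_def fun_eq_iff[symmetric] by (rule C_lin_arg[OF vZ]) (simp add: bil_def lin_def J_rules vZ_rules mult.commute)

lemma P_weak:
  assumes B: "bil sA sZ (*) B"
  shows "C (*) B (P z) = B 1 (P z)"
proof -
  note bd = bilD[OF B]
  have Bl: "lin sZ (*) (B x)" for x using B unfolding bil_def by blast
  have Bl2: "lin sA (*) (\<lambda>x. B x y)" for y using B unfolding bil_def by blast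
  have "C (*) B (P z) = C (*) (\<lambda>a w. C (*) B (sZ (J a) w)) z"
    unfolding P_def by (simp add: C_lin[OF C_lin_arg[OF vs_field B]])
  also have "\<dots> = C (*) (\<lambda>a w. C (*) (\<lambda>b w'. J a * B b w') w) z"
    by (simp add: C_scale_arg[OF vs_field B] C_fscale[OF vs_field])
  also have "\<dots> = C (*) (\<lambda>x w. D (*) (\<lambda>p q. J p * B q w) x) z"
    by (rule C_coass[OF vs_field, symmetric]) (simp add: tri_def lin_def bd J_rules algebra_simps)
  also have "\<dots> = C (*) (\<lambda>x w. J x * B 1 w) z"
  proof -
    have "D (*) (\<lambda>p q. J p * B q w) x = J x * B 1 w" for x w
    proof -
      have "D (*) (\<lambda>p q. J p * B q w) x = B (D sA (\<lambda>p q. sA (J p) q) x) w"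
        by (simp add: D_lin[OF Bl2] bd)
      also have "\<dots> = J x * B 1 w" using right_inv[of x] unfolding act_def by (simp add: bd)
      finally show ?thesis .
    qed
    then show ?thesis by simp
  qed
  also have "\<dots> = B 1 (P z)" unfolding P_def by (simp add: C_lin[OF Bl] bd)
  finally show ?thesis .
qed

lemma fsumv_tmul_delta:
  fixes F :: "'a \<times> 'z \<Rightarrow> 'k" and B :: "'a \<Rightarrow> 'z \<Rightarrow> 'k"
  assumes F: "fsupp F"
  shows "fsumv (*) (case_prod B) (tmul F (delta (1, u))) = fsumv (*) (\<lambda>(a, w). B a (w * u)) F"
  unfolding fsumv_tmul[OF vs_field F fsupp_delta]
  by (simp add: fsumv_delta[OF vs_field] case_prod_beta')

lemma galois_delta: "galois_map alpha (delta (x, y)) = tmul (alpha x) (delta (1, y))"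
  unfolding galois_map_def fext_delta by simp

lemma P_const: assumes f: "lin sZ (*) f" "f 1 = 1" shows "P z = sZ (f (P z)) 1"
proof -
  let ?w = "P z"
  have t: "teq2 sA sZ (galois_map alpha (delta (?w, 1))) (galois_map alpha (delta (1, ?w)))"
    unfolding galois_delta
  proof (rule tensor_ext[OF vA vZ fsupp_tmul[OF afs fsupp_delta] fsupp_tmul[OF afs fsupp_delta]])
    fix B :: "'a \<Rightarrow> 'z \<Rightarrow> 'k" assume B: "bil sA sZ (*) B"
    note bd = bilD[OF B]
    have "fsumv (*) (case_prod B) (tmul (alpha ?w) (delta (1, 1))) = C (*) B ?w"
      unfolding fsumv_tmul_delta[OF afs] C_def by (simp add: case_prod_beta')
    also have "\<dots> = B 1 ?w" by (rule P_weak[OF B])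
    also have "\<dots> = C (*) (\<lambda>a w. B a (w * ?w)) 1"
      by (subst C_one[OF vs_field]) (simp_all add: bil_def lin_def bd mul_sZ distrib_right)
    also have "\<dots> = fsumv (*) (case_prod B) (tmul (alpha 1) (delta (1, ?w)))"
      unfolding fsumv_tmul_delta[OF afs] C_def by (simp add: case_prod_beta')
    finally show "fsumv (*) (case_prod B) (tmul (alpha ?w) (delta (1, 1))) = fsumv (*) (case_prod B) (tmul (alpha 1) (delta (1, ?w)))" .
  qed
  have t2: "teq2 sZ sZ (delta (?w, 1)) (delta (1, ?w))"
    by (rule ginj[OF fsupp_delta fsupp_delta t])
  have bf: "bil sZ sZ sZ (\<lambda>x y. sZ (f x) y)" by (simp add: bil_def lin_def linD[OF f(1)] vZ_rules mult.commute)
  have "fsumv sZ (case_prod (\<lambda>x y. sZ (f x) y)) (delta (?w, 1)) = fsumv sZ (case_prod (\<lambda>x y. sZ (f x) y)) (delta (1, ?w))"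
    by (rule teq2_fsumv[OF vZ bf fsupp_delta fsupp_delta t2])
  then show ?thesis by (simp add: fsumv_delta[OF vZ] f(2) vZ_rules)
qed

lemma haar_unique:
  assumes f: "lin sZ (*) f" "f 1 = 1" and mu: "haar_measure sA sZ alpha mu"
  shows "mu z = f (P z)"
proof -
  have ml: "lin sZ (*) mu" using mu unfolding haar_measure_def by (blast intro: linear_lin)
  have mh: "C sA (\<lambda>a w. sA (mu w) a) z = sA (mu z) 1"
    using mu unfolding haar_measure_def C_def by (simp add: case_prod_beta')
  have m1: "mu 1 = 1" using mu unfolding haar_measure_def by blast
  have "mu z = J (sA (mu z) 1)" by (simp add: J_rules J1)
  also have "\<dots> = C (*) (\<lambda>a w. mu w * J a) z" unfolding mh[symmetric] by (simp add: C_lin[OF J_lin] J_rules)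
  also have "\<dots> = mu (P z)" unfolding P_def by (simp add: C_lin[OF ml] linD[OF ml] mult.commute)
  also have "\<dots> = mu (sZ (f (P z)) 1)" using P_const[OF f] by simp
  also have "\<dots> = f (P z)" by (simp add: linD[OF ml] m1)
  finally show ?thesis .
qed

lemma haar_exists:
  assumes f: "lin sZ (*) f" "f 1 = 1"
  shows "haar_measure sA sZ alpha (\<lambda>z. f (P z))"
proof -
  have l: "lin sZ (*) (\<lambda>z. f (P z))" using f(1) P_lin unfolding lin_def by simp
  have "C sA (\<lambda>a w. sA (f (P w)) a) z = sA (f (P z)) 1" for z
  proof -
    have "C sA (\<lambda>a w. sA (f (P w)) a) z = C sA (\<lambda>a w. C sA (\<lambda>b u. sA (J b * f u) a) w) z"
      unfolding P_def by (simp add: C_lin[OF f(1)] linD[OF f(1)] sA_C vA_rules)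
    also have "\<dots> = C sA (\<lambda>x u. D sA (\<lambda>a b. sA (J b * f u) a) x) z"
      by (rule C_coass[OF vA, symmetric]) (simp add: tri_def lin_def linD[OF f(1)] J_rules vA_rules mult.commute mult.left_commute distrib_left distrib_right)
    also have "\<dots> = C sA (\<lambda>x u. sA (J x * f u) 1) z"
    proof -
      have "D sA (\<lambda>a b. sA (J b * f u) a) x = sA (J x * f u) 1" for x u
      proof -
        have "D sA (\<lambda>a b. sA (f u) (sA (J b) a)) x = sA (f u) (sA (J x) 1)"
          using Jinv'[OF lin_sAc, of "f u" x] by (simp add: vA_rules mult.commute)
        then show ?thesis by (simp add: vA_rules mult.commute)
      qed
      then show ?thesis by simp
    qed
    also have "\<dots> = sA (C (*) (\<lambda>x u. J x * f u) z) 1" by (simp add: sA_C)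
    also have "\<dots> = sA (f (P z)) 1" unfolding P_def by (simp add: C_lin[OF f(1)] linD[OF f(1)])
    finally show ?thesis .
  qed
  moreover have "f (P 1) = 1"
  proof -
    have "P 1 = sZ (J 1) 1" unfolding P_def by (rule C_one[OF vZ]) (simp add: bil_def lin_def J_rules vZ_rules mult.commute)
    then show ?thesis using f by (simp add: J1 vZ_rules)
  qed
  ultimately show ?thesis unfolding haar_measure_def C_def
    by (simp add: lin_linear[OF vZ vs_field l] case_prod_beta')
qed

end


theorem proposition4p2p2:
  fixes sA :: "'k::field \<Rightarrow> 'a::ring_1 \<Rightarrow> 'a"
    and Delta :: "'a \<Rightarrow> ('a \<times> 'a \<Rightarrow> 'k)"
    and eps :: "'a \<Rightarrow> 'k"
    and sZ :: "'k \<Rightarrow> 'z::ring_1 \<Rightarrow> 'z"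
    and alpha :: "'z \<Rightarrow> ('a \<times> 'z \<Rightarrow> 'k)"
  assumes "hopf_algebra sA Delta eps"
    and "\<exists>J. haar_measure sA sA Delta J"
    and "galois_extension sA Delta eps sZ alpha"
  shows "\<exists>!mu. haar_measure sA sZ alpha mu"
proof -
  note H = assms(1)[unfolded hopf_algebra_def k_algebra_def tlinear_def]
  from H obtain S where S: "Vector_Spaces.linear sA sA S"
    "\<forall>a. fsumv sA (\<lambda>(x, y). S x * y) (Delta a) = sA (eps a) 1"
    "\<forall>a. fsumv sA (\<lambda>(x, y). x * S y) (Delta a) = sA (eps a) 1" by blast
  from assms(2) obtain J where J: "haar_measure sA sA Delta J" by blast
  note Jd = J[unfolded haar_measure_def]
  note G = assms(3)[unfolded galois_extension_def comodule_algebra_def k_algebra_def tlinear_def]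
  have eL: "lin sA (*) eps" using H by (blast intro: linear_lin)
  have SL: "lin sA sA S" using S(1) by (rule linear_lin)
  have JL: "lin sA (*) J" using Jd by (blast intro: linear_lin)
  have hc: "hopf_ctx sA Delta eps S"
    unfolding hopf_ctx_def using H S(2,3) eL SL by blast
  have hh: "hopf_haar sA Delta eps S J"
    unfolding hopf_haar_def hopf_haar_axioms_def using hc Jd JL by blast
  have cm: "comod sA Delta eps S J sZ alpha"
    unfolding comod_def comod_axioms_def using hh G by blast
  interpret C: comod sA Delta eps S J sZ alpha by (rule cm)
  obtain f where f: "lin sZ (*) f" "f 1 = 1"
    using exists_functional[OF C.vZ, of 1] by auto
  show ?thesis
  proof (rule ex1I[of _ "\<lambda>z. f (C.P z)"])
    show "haar_measure sA sZ alpha (\<lambda>z. f (C.P z))" by (rule C.haar_exists[OF f])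
  next
    fix mu assume "haar_measure sA sZ alpha mu"
    then show "mu = (\<lambda>z. f (C.P z))" using C.haar_unique[OF f] by (simp add: fun_eq_iff)
  qed
qed

end
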